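(* Let $\alpha>1$ and let $L_2(\alpha)=\{\alpha^n : n\in\mathbb{N}_0\}^2\subseteq\mathbb{R}^2$. Then \[h(L_2(\alpha))\le 2\left\lceil\log_{\alpha}\left(\frac{\alpha}{\alpha-1}\right)\right\rceil+3.\]
   Context: For a set $S\subseteq\mathbb{R}^d$, the Helly number $h(S)$ is the smallest $h$ such that the following holds: for every finite family $\mathcal{F}$ of convex sets in $\mathbb{R}^d$, if every $h$ or fewer sets of $\mathcal{F}$ have a point of $S$ in their intersection, then the intersection of all sets of $\mathcal{F}$ contains a point of $S$. If no such $h$ exists, $h(S)=\infty$. Here $\mathbb{N}_0=\{0,1,2,\dots\}$. *)

theory Defs
  imports "HOL-Analysis.Analysis" "HOL-Library.Extended_Nat"
begin

definition helly_prop :: "'a::real_vector set \<Rightarrow> nat \<Rightarrow> bool" where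
  "helly_prop S h \<longleftrightarrow>
     (\<forall>F :: 'a set set. finite F \<and> (\<forall>C\<in>F. convex C) \<and>
        (\<forall>G\<subseteq>F. card G \<le> h \<longrightarrow> \<Inter>G \<inter> S \<noteq> {})
        \<longrightarrow> \<Inter>F \<inter> S \<noteq> {})"

definition helly_number :: "'a::real_vector set \<Rightarrow> enat" where
  "helly_number S = (if \<exists>h. helly_prop S h then enat (LEAST h. helly_prop S h) else \<infinity>)"

definition L2 :: "real \<Rightarrow> (real \<times> real) set" where
  "L2 \<alpha> = {(\<alpha> ^ m, \<alpha> ^ n) | m n :: nat. True}"

end

theory Submission
  imports Defs
begin

lemma doignon:
  fixes S :: "(real \<times> real) set" and h :: nat
  assumes finS: "\<And>X. finite X \<Longrightarrow> finite (S \<inter> convex hull X)"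
  and emp: "\<And>Y. finite Y \<Longrightarrow> Y \<subseteq> S \<Longrightarrow> (\<forall>y\<in>Y. y \<notin> convex hull (Y - {y})) \<Longrightarrow>
              convex hull Y \<inter> S \<subseteq> Y \<Longrightarrow> card Y \<le> h"
  shows "helly_prop S h"
  unfolding helly_prop_def
proof (intro allI impI, elim conjE)
  fix F :: "(real \<times> real) set set"
  assume finF: "finite F" and convF: "\<forall>C\<in>F. convex C"
    and sub: "\<forall>G\<subseteq>F. card G \<le> h \<longrightarrow> \<Inter>G \<inter> S \<noteq> {}"
  show "\<Inter>F \<inter> S \<noteq> {}"
  proof
    assume FS: "\<Inter>F \<inter> S = {}"
    define Bad where "Bad = {G. G \<subseteq> F \<and> \<Inter>G \<inter> S = {}}"
    have "F \<in> Bad" using FS by (simp add: Bad_def)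
    then obtain F' where F'B: "F' \<in> Bad" and F'min: "\<And>G. G \<in> Bad \<Longrightarrow> card F' \<le> card G"
      using ex_has_least_nat[of "\<lambda>G. G \<in> Bad" F card] by blast
    have F'F: "F' \<subseteq> F" and F'S: "\<Inter>F' \<inter> S = {}" using F'B by (auto simp: Bad_def)
    have finF': "finite F'" using F'F finF finite_subset by blast
    have cardF': "card F' > h"
    proof (rule ccontr)
      assume "\<not> h < card F'"
      then have "\<Inter>F' \<inter> S \<noteq> {}" using sub F'F by auto
      then show False using F'S by simp
    qed
    have nonempt: "\<Inter>(F' - {C}) \<inter> S \<noteq> {}" if "C \<in> F'" for C
    proof
      assume "\<Inter>(F' - {C}) \<inter> S = {}"
      then have "F' - {C} \<in> Bad" using F'F by (auto simp: Bad_def)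
      then have "card F' \<le> card (F' - {C})" by (rule F'min)
      moreover have "card (F' - {C}) < card F'" using card_Diff1_less[OF finF' that] .
      ultimately show False by simp
    qed
    have "\<forall>C\<in>F'. \<exists>y. y \<in> \<Inter>(F' - {C}) \<inter> S" using nonempt by blast
    then obtain x where x0: "\<forall>C\<in>F'. x C \<in> \<Inter>(F' - {C}) \<inter> S" by (metis bchoice)
    have x: "x C \<in> \<Inter>(F' - {C}) \<inter> S" if "C \<in> F'" for C using x0 that by blast
    have xnot: "x C \<notin> C" if "C \<in> F'" for C
    proof
      assume "x C \<in> C"
      then have "x C \<in> \<Inter>F'" using x[OF that] by auto
      then show False using F'S x[OF that] by auto
    qed
    have xin: "x C \<in> D" if "C \<in> F'" "D \<in> F'" "C \<noteq> D" for C D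
      using x[OF that(1)] that by auto
    have injx: "inj_on x F'"
    proof (rule inj_onI)
      fix C D assume "C \<in> F'" "D \<in> F'" "x C = x D"
      then show "C = D" using xin xnot by metis
    qed
    define X where "X = x ` F'"
    have finX: "finite X" using finF' by (simp add: X_def)
    have XS: "X \<subseteq> S" using x by (auto simp: X_def)
    define T where "T = S \<inter> convex hull X"
    have finT: "finite T" unfolding T_def by (rule finS[OF finX])
    have XT: "X \<subseteq> T" using XS by (auto simp: T_def hull_subset[THEN subsetD])
    have sep: "\<exists>C a b. C \<in> F' \<and> inner a t \<ge> b \<and> (\<forall>z\<in>convex hull (X - {x C}). inner a z < b)"
      if "t \<in> T" for t
    proof -
      have "t \<notin> \<Inter>F'" using that F'S by (auto simp: T_def)
      then obtain C where C: "C \<in> F'" "t \<notin> C" by auto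
      have "X - {x C} \<subseteq> C"
      proof
        fix z assume "z \<in> X - {x C}"
        then obtain D where "D \<in> F'" "z = x D" "D \<noteq> C" by (auto simp: X_def)
        then show "z \<in> C" using xin C(1) by blast
      qed
      then have "convex hull (X - {x C}) \<subseteq> C" using convF F'F C(1) by (meson hull_minimal subsetD)
      then have tK: "t \<notin> convex hull (X - {x C})" using C by auto
      have "closed (convex hull (X - {x C}))"
        using finX by (simp add: compact_imp_closed finite_imp_compact_convex_hull)
      then obtain a b where ab: "inner a t < b" "\<forall>z\<in>convex hull (X - {x C}). inner a z > b"
        using separating_hyperplane_closed_point[OF convex_convex_hull _ tK] by blast
      show ?thesis
        apply (rule exI[of _ C], rule exI[of _ "-a"], rule exI[of _ "-b"])
        using ab C by (auto simp: inner_minus_left)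
    qed
    have "\<forall>t\<in>T. \<exists>q. fst q \<in> F' \<and> inner (fst (snd q)) t \<ge> snd (snd q) \<and>
         (\<forall>z\<in>convex hull (X - {x (fst q)}). inner (fst (snd q)) z < snd (snd q))"
      using sep by fastforce
    then obtain q where q: "\<forall>t\<in>T. fst (q t) \<in> F' \<and> inner (fst (snd (q t))) t \<ge> snd (snd (q t)) \<and>
         (\<forall>z\<in>convex hull (X - {x (fst (q t))}). inner (fst (snd (q t))) z < snd (snd (q t)))"
      by (metis bchoice)
    define i where "i t = fst (q t)" for t
    define a where "a t = fst (snd (q t))" for t
    define b where "b t = snd (snd (q t))" for t
    have iab: "i t \<in> F' \<and> inner (a t) t \<ge> b t \<and>
         (\<forall>z\<in>convex hull (X - {x (i t)}). inner (a t) z < b t)" if "t \<in> T" for t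
      using q that unfolding i_def a_def b_def by blast
    have P2: "inner (a t) (x C) < b t" if "t \<in> T" "C \<in> F'" "i t \<noteq> C" for t C
    proof -
      have it: "i t \<in> F'" using iab[OF that(1)] by blast
      have "x C \<noteq> x (i t)" using injx that(2,3) it by (metis inj_onD)
      moreover have "x C \<in> X" using that(2) by (simp add: X_def)
      ultimately have "x C \<in> X - {x (i t)}" by blast
      then have "x C \<in> convex hull (X - {x (i t)})" by (rule hull_subset[THEN subsetD])
      then show ?thesis using iab[OF that(1)] by blast
    qed
    define Bad2 where "Bad2 = {I. I \<subseteq> T \<and> (\<forall>z\<in>T. \<exists>t\<in>I. inner (a t) z \<ge> b t)}"
    have "T \<in> Bad2" using iab by (auto simp: Bad2_def)
    then obtain I where IB: "I \<in> Bad2" and Imin: "\<And>J. J \<in> Bad2 \<Longrightarrow> card I \<le> card J"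
      using ex_has_least_nat[of "\<lambda>J. J \<in> Bad2" T card] by blast
    have IT: "I \<subseteq> T" and Icov: "\<forall>z\<in>T. \<exists>t\<in>I. inner (a t) z \<ge> b t" using IB by (auto simp: Bad2_def)
    have finI: "finite I" using IT finT finite_subset by blast
    have "F' \<subseteq> i ` I"
    proof
      fix C assume C: "C \<in> F'"
      then have "x C \<in> T" using XT by (auto simp: X_def)
      then obtain t where t: "t \<in> I" "inner (a t) (x C) \<ge> b t" using Icov by blast
      then have "i t = C" using P2[of t C] IT C by force
      then show "C \<in> i ` I" using t by blast
    qed
    then have "card F' \<le> card (i ` I)" using finI by (simp add: card_mono)
    also have "\<dots> \<le> card I" using finI by (rule card_image_le)
    finally have cardI: "card I > h" using cardF' by simp
    have Iwit: "\<exists>y\<in>T. \<forall>s\<in>I - {t}. inner (a s) y < b s" if "t \<in> I" for t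
    proof (rule ccontr)
      assume "\<not> ?thesis"
      then have "I - {t} \<in> Bad2" using IT by (force simp: Bad2_def)
      then have "card I \<le> card (I - {t})" by (rule Imin)
      moreover have "card (I - {t}) < card I" using card_Diff1_less[OF finI that] .
      ultimately show False by simp
    qed
    define D where "D t = insert (b t) ((\<lambda>y. inner (a t) y) ` T)" for t
    define Feas where "Feas = {c. c \<in> PiE I D \<and> (\<forall>t\<in>I. b t \<le> c t) \<and> (\<forall>z\<in>T. \<exists>t\<in>I. inner (a t) z \<ge> c t)}"
    have finFeas: "finite Feas"
    proof -
      have "finite (PiE I D)" using finI finT by (intro finite_PiE) (auto simp: D_def)
      then show ?thesis by (rule finite_subset[rotated]) (auto simp: Feas_def)
    qed
    have bFeas: "restrict b I \<in> Feas" using Icov by (auto simp: Feas_def D_def)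
    define mu where "mu = Max ((\<lambda>c. sum c I) ` Feas)"
    have "mu \<in> (\<lambda>c. sum c I) ` Feas"
      unfolding mu_def using finFeas bFeas by (intro Max_in) auto
    then obtain c where cF: "c \<in> Feas" and cmu: "sum c I = mu" by auto
    have cmax: "sum c' I \<le> sum c I" if "c' \<in> Feas" for c'
      using Max_ge[of "(\<lambda>c. sum c I) ` Feas"] finFeas that cmu unfolding mu_def by auto
    have cPi: "c \<in> PiE I D" and cb: "\<forall>t\<in>I. b t \<le> c t" and cfe: "\<forall>z\<in>T. \<exists>t\<in>I. inner (a t) z \<ge> c t"
      using cF by (auto simp: Feas_def)
    have ywit: "\<exists>y\<in>T. (\<forall>s\<in>I - {t}. inner (a s) y < c s) \<and> inner (a t) y = c t" if tI: "t \<in> I" for t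
    proof -
      define Yt where "Yt = {y\<in>T. \<forall>s\<in>I - {t}. inner (a s) y < c s}"
      have finYt: "finite Yt" using finT by (simp add: Yt_def)
      have Ytne: "Yt \<noteq> {}"
      proof -
        obtain y where "y \<in> T" "\<forall>s\<in>I - {t}. inner (a s) y < b s" using Iwit[OF tI] by blast
        then have "y \<in> Yt" using cb by (force simp: Yt_def)
        then show ?thesis by blast
      qed
      have Ytge: "inner (a t) y \<ge> c t" if "y \<in> Yt" for y
      proof -
        have "y \<in> T" using that by (simp add: Yt_def)
        then obtain s where s: "s \<in> I" "inner (a s) y \<ge> c s" using cfe by blast
        then have "s = t" using that unfolding Yt_def by (metis (no_types, lifting) DiffI mem_Collect_eq not_le singletonD)
        then show ?thesis using s by simp
      qed
      define beta where "beta = Min ((\<lambda>y. inner (a t) y) ` Yt)"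
      have "beta \<in> (\<lambda>y. inner (a t) y) ` Yt"
        unfolding beta_def using finYt Ytne by (intro Min_in) auto
      then obtain y0 where y0: "y0 \<in> Yt" "inner (a t) y0 = beta" by auto
      have betale: "beta \<le> inner (a t) y" if "y \<in> Yt" for y
        using Min_le[of "(\<lambda>y. inner (a t) y) ` Yt"] finYt that unfolding beta_def by auto
      have "beta = c t"
      proof (rule ccontr)
        assume ne: "beta \<noteq> c t"
        have "c t \<le> beta" using Ytge[OF y0(1)] y0(2) by simp
        then have gt: "beta > c t" using ne by simp
        define c' where "c' = c(t := beta)"
        have "c' \<in> Feas"
        proof -
          have "beta \<in> D t" using y0 by (auto simp: D_def Yt_def)
          then have "c' \<in> PiE I D" using cPi tI by (auto simp: c'_def PiE_def Pi_def extensional_def)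
          moreover have "\<forall>s\<in>I. b s \<le> c' s" using cb gt tI by (auto simp: c'_def)
          moreover have "\<forall>z\<in>T. \<exists>s\<in>I. inner (a s) z \<ge> c' s"
          proof
            fix z assume zT: "z \<in> T"
            show "\<exists>s\<in>I. inner (a s) z \<ge> c' s"
            proof (cases "\<exists>s\<in>I - {t}. inner (a s) z \<ge> c s")
              case True
              then show ?thesis by (auto simp: c'_def)
            next
              case False
              then have "z \<in> Yt" using zT by (auto simp: Yt_def not_le)
              then have "inner (a t) z \<ge> c' t" using betale by (simp add: c'_def)
              then show ?thesis using tI by blast
            qed
          qed
          ultimately show ?thesis by (simp add: Feas_def)
        qed
        then have "sum c' I \<le> sum c I" by (rule cmax)
        moreover have "sum c' I = sum c I - c t + beta"
        proof -
          have "sum c' I = sum c' (I - {t}) + c' t" using finI tI by (simp add: sum.remove add.commute)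
          also have "sum c' (I - {t}) = sum c (I - {t})" by (rule sum.cong) (auto simp: c'_def)
          also have "sum c (I - {t}) = sum c I - c t" using finI tI by (simp add: sum_diff1)
          finally show ?thesis by (simp add: c'_def)
        qed
        ultimately show False using gt by simp
      qed
      then show ?thesis using y0 by (auto simp: Yt_def)
    qed
    obtain yy where yy0: "\<forall>t\<in>I. yy t \<in> T \<and> (\<forall>s\<in>I - {t}. inner (a s) (yy t) < c s) \<and> inner (a t) (yy t) = c t"
      using bchoice[of I "\<lambda>t y. y \<in> T \<and> (\<forall>s\<in>I - {t}. inner (a s) y < c s) \<and> inner (a t) y = c t"] ywit by blast
    have yy: "yy t \<in> T \<and> (\<forall>s\<in>I - {t}. inner (a s) (yy t) < c s) \<and> inner (a t) (yy t) = c t" if "t \<in> I" for t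
      using yy0 that by blast
    have injyy: "inj_on yy I"
    proof (rule inj_onI)
      fix s t assume st: "s \<in> I" "t \<in> I" "yy s = yy t"
      show "s = t"
      proof (rule ccontr)
        assume "s \<noteq> t"
        then have "inner (a s) (yy t) < c s" using yy[OF st(2)] st by auto
        then show False using yy[OF st(1)] st by simp
      qed
    qed
    define Y where "Y = yy ` I"
    have finY: "finite Y" using finI by (simp add: Y_def)
    have cardY: "card Y = card I" using injyy by (simp add: Y_def card_image)
    have YT: "Y \<subseteq> T" using yy by (auto simp: Y_def)
    have YS: "Y \<subseteq> S" using YT by (auto simp: T_def)
    have hullrest: "convex hull (Y - {yy t}) \<subseteq> {w. inner (a t) w < c t}" if "t \<in> I" for t
    proof (rule hull_minimal)
      show "Y - {yy t} \<subseteq> {w. inner (a t) w < c t}"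
      proof
        fix w assume "w \<in> Y - {yy t}"
        then obtain s where s: "s \<in> I" "w = yy s" "yy s \<noteq> yy t" by (auto simp: Y_def)
        then have "s \<noteq> t" by blast
        then have "t \<in> I - {s}" using that by blast
        then show "w \<in> {w. inner (a t) w < c t}" using yy[OF s(1)] s(2) by blast
      qed
      show "convex {w. inner (a t) w < c t}" by (rule convex_halfspace_lt)
    qed
    have cpos: "\<forall>y\<in>Y. y \<notin> convex hull (Y - {y})"
    proof
      fix y assume "y \<in> Y"
      then obtain t where t: "t \<in> I" "y = yy t" by (auto simp: Y_def)
      show "y \<notin> convex hull (Y - {y})" using hullrest[OF t(1)] yy[OF t(1)] t by auto
    qed
    have empt: "convex hull Y \<inter> S \<subseteq> Y"
    proof
      fix z assume z: "z \<in> convex hull Y \<inter> S"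
      have "Y \<subseteq> convex hull X" using YT by (auto simp: T_def)
      then have "convex hull Y \<subseteq> convex hull X" by (intro hull_minimal) auto
      then have zT: "z \<in> T" using z by (auto simp: T_def)
      then obtain t where t: "t \<in> I" "inner (a t) z \<ge> c t" using cfe by blast
      have Yins: "Y = insert (yy t) (Y - {yy t})" using t(1) by (auto simp: Y_def)
      show "z \<in> Y"
      proof (cases "Y - {yy t} = {}")
        case True
        then have "Y = {yy t}" using Yins by blast
        then have "z \<in> convex hull {yy t}" using z by simp
        then have "z = yy t" by simp
        then show ?thesis using Yins by blast
      next
        case False
        then obtain u v q where uv: "u \<ge> 0" "v \<ge> 0" "u + v = 1" "q \<in> convex hull (Y - {yy t})"
            "z = u *\<^sub>R yy t + v *\<^sub>R q"
        proof -
          have "z \<in> convex hull (insert (yy t) (Y - {yy t}))" using z Yins by (metis IntD1)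
          then show ?thesis using that unfolding convex_hull_insert[OF False] by blast
        qed
        have q: "inner (a t) q < c t" using hullrest[OF t(1)] uv(4) by auto
        have "inner (a t) z = u * c t + v * inner (a t) q"
          using uv(5) yy[OF t(1)] by (simp add: inner_add_right)
        show ?thesis
        proof (cases "v = 0")
          case True
          then show ?thesis using uv Yins by auto
        next
          case False
          then have "v * inner (a t) q < v * c t" using q uv(2) by simp
          then have "inner (a t) z < u * c t + v * c t"
            using \<open>inner (a t) z = u * c t + v * inner (a t) q\<close> by simp
          also have "u * c t + v * c t = (u + v) * c t" by (simp add: distrib_right)
          also have "\<dots> = c t" using uv(3) by simp
          finally have "inner (a t) z < c t" .
          then show ?thesis using t by simp
        qed
      qed
    qed
    have "card Y \<le> h" using emp[OF finY YS cpos empt] .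
    then show False using cardY cardI by simp
  qed
qed

lemma seg_hull: "a \<in> convex hull S \<Longrightarrow> b \<in> convex hull S \<Longrightarrow> z \<in> closed_segment a b \<Longrightarrow> z \<in> convex hull S"
  by (meson closed_segment_subset convex_convex_hull subsetD)

lemma hseg:
  fixes x1 x x2 y :: real
  assumes "x1 \<le> x" "x \<le> x2"
  shows "(x, y) \<in> closed_segment (x1, y) (x2, y)"
proof (cases "x1 = x2")
  case True
  then have "x = x1" using assms by simp
  then show ?thesis by simp
next
  case False
  then have d: "x2 - x1 > 0" using assms by simp
  define u where "u = (x - x1) / (x2 - x1)"
  have u: "0 \<le> u" "u \<le> 1" using assms d by (auto simp: u_def divide_simps)
  have e: "u * (x2 - x1) = x - x1" unfolding u_def using d by simp
  have "(1 - u) *\<^sub>R (x1, y) + u *\<^sub>R (x2, y) = (x1 + u * (x2 - x1), y)"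
    by (simp add: algebra_simps)
  then have "(x, y) = (1 - u) *\<^sub>R (x1, y) + u *\<^sub>R (x2, y)" using e by simp
  then show ?thesis using u by (auto simp: in_segment)
qed

lemma vseg:
  fixes y1 y y2 x :: real
  assumes "y1 \<le> y" "y \<le> y2"
  shows "(x, y) \<in> closed_segment (x, y1) (x, y2)"
proof (cases "y1 = y2")
  case True
  then have "y = y1" using assms by simp
  then show ?thesis by simp
next
  case False
  then have d: "y2 - y1 > 0" using assms by simp
  define u where "u = (y - y1) / (y2 - y1)"
  have u: "0 \<le> u" "u \<le> 1" using assms d by (auto simp: u_def divide_simps)
  have e: "u * (y2 - y1) = y - y1" unfolding u_def using d by simp
  have "(1 - u) *\<^sub>R (x, y1) + u *\<^sub>R (x, y2) = (x, y1 + u * (y2 - y1))"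
    by (simp add: algebra_simps)
  then have "(x, y) = (1 - u) *\<^sub>R (x, y1) + u *\<^sub>R (x, y2)" using e by simp
  then show ?thesis using u by (auto simp: in_segment)
qed

lemma cross_h:
  fixes p q :: "real \<times> real"
  assumes "snd q \<le> h" "h \<le> snd p"
  shows "\<exists>u. 0 \<le> u \<and> u \<le> 1 \<and> snd ((1 - u) *\<^sub>R p + u *\<^sub>R q) = h"
proof (cases "snd p = snd q")
  case True
  then show ?thesis using assms by (intro exI[of _ 0]) auto
next
  case False
  then have d: "snd p - snd q > 0" using assms by simp
  define u where "u = (snd p - h) / (snd p - snd q)"
  have u: "0 \<le> u" "u \<le> 1" using assms d by (auto simp: u_def divide_simps)
  have e: "u * (snd p - snd q) = snd p - h" unfolding u_def using d by simp
  have "snd ((1 - u) *\<^sub>R p + u *\<^sub>R q) = snd p - u * (snd p - snd q)"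
    by (simp add: algebra_simps)
  then have "snd ((1 - u) *\<^sub>R p + u *\<^sub>R q) = h" using e by simp
  then show ?thesis using u by blast
qed

lemma cross_v:
  fixes p q :: "real \<times> real"
  assumes "fst q \<le> h" "h \<le> fst p"
  shows "\<exists>u. 0 \<le> u \<and> u \<le> 1 \<and> fst ((1 - u) *\<^sub>R p + u *\<^sub>R q) = h"
proof (cases "fst p = fst q")
  case True
  then show ?thesis using assms by (intro exI[of _ 0]) auto
next
  case False
  then have d: "fst p - fst q > 0" using assms by simp
  define u where "u = (fst p - h) / (fst p - fst q)"
  have u: "0 \<le> u" "u \<le> 1" using assms d by (auto simp: u_def divide_simps)
  have e: "u * (fst p - fst q) = fst p - h" unfolding u_def using d by simp
  have "fst ((1 - u) *\<^sub>R p + u *\<^sub>R q) = fst p - u * (fst p - fst q)"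
    by (simp add: algebra_simps)
  then have "fst ((1 - u) *\<^sub>R p + u *\<^sub>R q) = h" using e by simp
  then show ?thesis using u by blast
qed

lemma quadrant:
  fixes s p1 p2 p3 p4 :: "real \<times> real"
  assumes "fst s \<le> fst p1" "snd s \<le> snd p1" "fst p2 \<le> fst s" "snd s \<le> snd p2"
    "fst p3 \<le> fst s" "snd p3 \<le> snd s" "fst s \<le> fst p4" "snd p4 \<le> snd s"
  shows "s \<in> convex hull {p1, p2, p3, p4}"
proof -
  obtain u where u: "0 \<le> u" "u \<le> 1" "snd ((1 - u) *\<^sub>R p2 + u *\<^sub>R p3) = snd s"
    using cross_h[of p3 "snd s" p2] assms by auto
  define e2 where "e2 = (1 - u) *\<^sub>R p2 + u *\<^sub>R p3"
  obtain v where v: "0 \<le> v" "v \<le> 1" "snd ((1 - v) *\<^sub>R p1 + v *\<^sub>R p4) = snd s"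
    using cross_h[of p4 "snd s" p1] assms by auto
  define e1 where "e1 = (1 - v) *\<^sub>R p1 + v *\<^sub>R p4"
  have e2s: "e2 \<in> closed_segment p2 p3" using u by (auto simp: e2_def in_segment)
  have e1s: "e1 \<in> closed_segment p1 p4" using v by (auto simp: e1_def in_segment)
  have "fst e2 = (1 - u) * fst p2 + u * fst p3" by (simp add: e2_def)
  also have "\<dots> \<le> (1 - u) * fst s + u * fst s"
    using u assms by (intro add_mono mult_left_mono) auto
  finally have fe2: "fst e2 \<le> fst s" by (simp add: algebra_simps)
  have "(1 - v) * fst s + v * fst s \<le> (1 - v) * fst p1 + v * fst p4"
    using v assms by (intro add_mono mult_left_mono) auto
  also have "\<dots> = fst e1" by (simp add: e1_def)
  finally have fe1: "fst s \<le> fst e1" by (simp add: algebra_simps)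
  have H: "convex hull {p1, p2, p3, p4} \<supseteq> {p1, p2, p3, p4}" by (rule hull_subset)
  have "e2 \<in> convex hull {p1, p2, p3, p4}"
    by (rule seg_hull[OF _ _ e2s]) (use H in auto)
  moreover have "e1 \<in> convex hull {p1, p2, p3, p4}"
    by (rule seg_hull[OF _ _ e1s]) (use H in auto)
  moreover have "s \<in> closed_segment e2 e1"
  proof -
    have "(fst s, snd s) \<in> closed_segment (fst e2, snd s) (fst e1, snd s)"
      by (rule hseg[OF fe2 fe1])
    moreover have "e2 = (fst e2, snd s)" using u(3) unfolding e2_def by (metis prod.collapse)
    moreover have "e1 = (fst e1, snd s)" using v(3) unfolding e1_def by (metis prod.collapse)
    ultimately show ?thesis by simp
  qed
  ultimately show ?thesis by (rule seg_hull)
qed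

lemma fincol: "finite W \<Longrightarrow> finite {n. (c, n) \<in> W}"
  by (rule finite_subset[of _ "snd ` W"]) (auto intro: rev_image_eqI)

lemma finrow: "finite W \<Longrightarrow> finite {m. (m, r) \<in> W}"
  by (rule finite_subset[of _ "fst ` W"]) (auto intro: rev_image_eqI)

lemma colmin:
  assumes "finite W" "(c, n0) \<in> W"
  shows "(c, Min {n. (c, n) \<in> W}) \<in> W \<and> (\<forall>n. (c, n) \<in> W \<longrightarrow> Min {n. (c, n) \<in> W} \<le> n)"
proof -
  have ne: "{n. (c, n) \<in> W} \<noteq> {}" using assms(2) by auto
  show ?thesis using Min_in[OF fincol[OF assms(1)] ne] Min_le[OF fincol[OF assms(1)]] by auto
qed

lemma colmax:
  assumes "finite W" "(c, n0) \<in> W"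
  shows "(c, Max {n. (c, n) \<in> W}) \<in> W \<and> (\<forall>n. (c, n) \<in> W \<longrightarrow> n \<le> Max {n. (c, n) \<in> W})"
proof -
  have ne: "{n. (c, n) \<in> W} \<noteq> {}" using assms(2) by auto
  show ?thesis using Max_in[OF fincol[OF assms(1)] ne] Max_ge[OF fincol[OF assms(1)]] by auto
qed

lemma rowmin:
  assumes "finite W" "(m0, r) \<in> W"
  shows "(Min {m. (m, r) \<in> W}, r) \<in> W \<and> (\<forall>m. (m, r) \<in> W \<longrightarrow> Min {m. (m, r) \<in> W} \<le> m)"
proof -
  have ne: "{m. (m, r) \<in> W} \<noteq> {}" using assms(2) by auto
  show ?thesis using Min_in[OF finrow[OF assms(1)] ne] Min_le[OF finrow[OF assms(1)]] by auto
qed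

lemma rowmax:
  assumes "finite W" "(m0, r) \<in> W"
  shows "(Max {m. (m, r) \<in> W}, r) \<in> W \<and> (\<forall>m. (m, r) \<in> W \<longrightarrow> m \<le> Max {m. (m, r) \<in> W})"
proof -
  have ne: "{m. (m, r) \<in> W} \<noteq> {}" using assms(2) by auto
  show ?thesis using Max_in[OF finrow[OF assms(1)] ne] Max_ge[OF finrow[OF assms(1)]] by auto
qed

locale explat =
  fixes \<alpha> :: real
  assumes a1: "1 < \<alpha>"
begin

definition P :: "nat \<times> nat \<Rightarrow> real \<times> real" where
  "P w = (\<alpha> ^ fst w, \<alpha> ^ snd w)"

lemma pow_less_iff [simp]: "\<alpha> ^ m < \<alpha> ^ n \<longleftrightarrow> m < n"
  using a1 by (simp add: power_strict_increasing_iff)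

lemma pow_le_iff [simp]: "\<alpha> ^ m \<le> \<alpha> ^ n \<longleftrightarrow> m \<le> n"
  using a1 by (simp add: power_increasing_iff)

lemma pow_eq_iff [simp]: "\<alpha> ^ m = \<alpha> ^ n \<longleftrightarrow> m = n"
  by (metis nle_le pow_le_iff)

lemma pow_pos: "\<alpha> ^ m > 0" using a1 by simp

lemma inj_P: "inj P"
  by (rule injI) (auto simp: P_def prod_eq_iff)

lemma P_eq_iff [simp]: "P u = P v \<longleftrightarrow> u = v"
  using inj_P by (simp add: inj_eq)

lemma L2_eq: "L2 \<alpha> = range P"
  apply (auto simp: L2_def P_def)
  subgoal for m n by (rule range_eqI[of _ _ "(m,n)"]) simp
  done

definition cpos :: "(nat \<times> nat) set \<Rightarrow> bool" where
  "cpos W \<longleftrightarrow> (\<forall>w\<in>W. P w \<notin> convex hull (P ` (W - {w})))"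

definition empt :: "(nat \<times> nat) set \<Rightarrow> bool" where
  "empt W \<longleftrightarrow> (\<forall>z. P z \<in> convex hull (P ` W) \<longrightarrow> z \<in> W)"

lemma noextra:
  assumes "cpos W" "empt W" "Q \<subseteq> W" "z \<notin> Q" "P z \<in> convex hull (P ` Q)"
  shows False
proof -
  have "convex hull (P ` Q) \<subseteq> convex hull (P ` W)" using assms(3) by (intro hull_mono image_mono)
  then have "z \<in> W" using assms(2,5) unfolding empt_def by blast
  moreover have "convex hull (P ` Q) \<subseteq> convex hull (P ` (W - {z}))"
    using assms(3,4) by (intro hull_mono image_mono) auto
  ultimately show False using assms(1,5) by (auto simp: cpos_def)
qed

lemma quadP:
  assumes "fst s \<le> fst w1" "snd s \<le> snd w1" "fst w2 \<le> fst s" "snd s \<le> snd w2"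
    "fst w3 \<le> fst s" "snd w3 \<le> snd s" "fst s \<le> fst w4" "snd w4 \<le> snd s"
  shows "P s \<in> convex hull (P ` {w1, w2, w3, w4})"
  using quadrant[of "P s" "P w1" "P w2" "P w3" "P w4"] assms by (simp add: P_def)

lemma quad_noextra:
  assumes "cpos W" "empt W" "w1 \<in> W" "w2 \<in> W" "w3 \<in> W" "w4 \<in> W"
    "s \<noteq> w1" "s \<noteq> w2" "s \<noteq> w3" "s \<noteq> w4"
    "fst s \<le> fst w1" "snd s \<le> snd w1" "fst w2 \<le> fst s" "snd s \<le> snd w2"
    "fst w3 \<le> fst s" "snd w3 \<le> snd s" "fst s \<le> fst w4" "snd w4 \<le> snd s"
  shows False
  using noextra[OF assms(1,2), of "{w1,w2,w3,w4}" s] quadP[of s w1 w2 w3 w4] assms by auto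


lemma claimS1:
  assumes fin: "finite W" and cp: "cpos W" and em: "empt W"
    and box: "\<forall>w\<in>W. a0 \<le> fst w \<and> fst w \<le> M \<and> b0 \<le> snd w \<and> snd w \<le> N"
    and ea0: "\<exists>w\<in>W. fst w = a0" and eM: "\<exists>w\<in>W. fst w = M"
    and eb0: "\<exists>w\<in>W. snd w = b0" and eN: "\<exists>w\<in>W. snd w = N"
    and nc: "(a0, b0) \<notin> W"
  shows "(a0, N) \<in> W \<and> (M, b0) \<in> W"
proof -
  obtain n0 where n0: "(a0, n0) \<in> W" using ea0 by (metis prod.collapse)
  obtain m0 where m0: "(m0, b0) \<in> W" using eb0 by (metis prod.collapse)
  obtain n1 where n1: "(M, n1) \<in> W" using eM by (metis prod.collapse)
  obtain m1 where m1: "(m1, N) \<in> W" using eN by (metis prod.collapse)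
  define l where "l = Min {n. (a0, n) \<in> W}"
  have lW: "(a0, l) \<in> W" and lmin: "\<And>n. (a0, n) \<in> W \<Longrightarrow> l \<le> n"
    using colmin[OF fin n0] unfolding l_def by auto
  define b where "b = Min {m. (m, b0) \<in> W}"
  have bW: "(b, b0) \<in> W" and bmin: "\<And>m. (m, b0) \<in> W \<Longrightarrow> b \<le> m"
    using rowmin[OF fin m0] unfolding b_def by auto
  have "b0 \<le> l" using box lW by auto
  moreover have "l \<noteq> b0" using lW nc by auto
  ultimately have b0l: "b0 < l" by simp
  have "a0 \<le> b" using box bW by auto
  moreover have "b \<noteq> a0" using bW nc by auto
  ultimately have a0b: "a0 < b" by simp
  define s where "s = (b, l)"
  have key: "fst p < b \<or> snd p < l" if "p \<in> W" "p \<noteq> s" for p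
  proof (rule ccontr)
    assume "\<not> (fst p < b \<or> snd p < l)"
    then have "b \<le> fst p" "l \<le> snd p" by auto
    then show False
      using quad_noextra[OF cp em that(1) lW lW bW, of s] that(2) a0b b0l
      by (auto simp: s_def)
  qed
  have c01: "(a0, N) \<in> W"
  proof (rule ccontr)
    assume nA: "(a0, N) \<notin> W"
    define l' where "l' = Max {n. (a0, n) \<in> W}"
    have l'W: "(a0, l') \<in> W" and l'max: "\<And>n. (a0, n) \<in> W \<Longrightarrow> n \<le> l'"
      using colmax[OF fin n0] unfolding l'_def by auto
    have "l \<le> l'" using l'max lW by blast
    have "l' \<le> N" using box l'W by auto
    moreover have "l' \<noteq> N" using l'W nA by auto
    ultimately have l'N: "l' < N" by simp
    define t' where "t' = Min {m. (m, N) \<in> W}"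
    have t'W: "(t', N) \<in> W" using rowmin[OF fin m1] unfolding t'_def by auto
    have "a0 \<le> t'" using box t'W by auto
    moreover have "t' \<noteq> a0" using t'W nA by auto
    ultimately have a0t': "a0 < t'" by simp
    have "(t', N) \<noteq> s" using \<open>l \<le> l'\<close> l'N by (auto simp: s_def)
    then have "t' < b" using key[OF t'W] \<open>l \<le> l'\<close> l'N by auto
    then show False
      using quad_noextra[OF cp em t'W l'W l'W bW, of "(t', l')"] a0t' l'N \<open>l \<le> l'\<close> b0l
      by auto
  qed
  have c10: "(M, b0) \<in> W"
  proof (rule ccontr)
    assume nB: "(M, b0) \<notin> W"
    define b'' where "b'' = Max {m. (m, b0) \<in> W}"
    have b''W: "(b'', b0) \<in> W" and b''max: "\<And>m. (m, b0) \<in> W \<Longrightarrow> m \<le> b''"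
      using rowmax[OF fin m0] unfolding b''_def by auto
    have "b \<le> b''" using b''max bW by blast
    have "b'' \<le> M" using box b''W by auto
    moreover have "b'' \<noteq> M" using b''W nB by auto
    ultimately have b''M: "b'' < M" by simp
    define r'' where "r'' = Min {n. (M, n) \<in> W}"
    have r''W: "(M, r'') \<in> W" using colmin[OF fin n1] unfolding r''_def by auto
    have "b0 \<le> r''" using box r''W by auto
    moreover have "r'' \<noteq> b0" using r''W nB by auto
    ultimately have b0r'': "b0 < r''" by simp
    have "(M, r'') \<noteq> s" using \<open>b \<le> b''\<close> b''M by (auto simp: s_def)
    then have "r'' < l" using key[OF r''W] \<open>b \<le> b''\<close> b''M by auto
    then show False
      using quad_noextra[OF cp em r''W lW b''W b''W, of "(b'', r'')"] b''M b0r'' \<open>b \<le> b''\<close> a0b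
      by auto
  qed
  show ?thesis using c01 c10 by simp
qed

lemma claimS2:
  assumes fin: "finite W" and cp: "cpos W" and em: "empt W"
    and box: "\<forall>w\<in>W. a0 \<le> fst w \<and> fst w \<le> M \<and> b0 \<le> snd w \<and> snd w \<le> N"
    and ea0: "\<exists>w\<in>W. fst w = a0" and eM: "\<exists>w\<in>W. fst w = M"
    and eb0: "\<exists>w\<in>W. snd w = b0" and eN: "\<exists>w\<in>W. snd w = N"
    and nc: "(M, N) \<notin> W"
  shows "(a0, N) \<in> W \<and> (M, b0) \<in> W"
proof -
  obtain n0 where n0: "(a0, n0) \<in> W" using ea0 by (metis prod.collapse)
  obtain m0 where m0: "(m0, b0) \<in> W" using eb0 by (metis prod.collapse)
  obtain n1 where n1: "(M, n1) \<in> W" using eM by (metis prod.collapse)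
  obtain m1 where m1: "(m1, N) \<in> W" using eN by (metis prod.collapse)
  define r where "r = Max {n. (M, n) \<in> W}"
  have rW: "(M, r) \<in> W" and rmax: "\<And>n. (M, n) \<in> W \<Longrightarrow> n \<le> r"
    using colmax[OF fin n1] unfolding r_def by auto
  define t where "t = Max {m. (m, N) \<in> W}"
  have tW: "(t, N) \<in> W" and tmax: "\<And>m. (m, N) \<in> W \<Longrightarrow> m \<le> t"
    using rowmax[OF fin m1] unfolding t_def by auto
  have "r \<le> N" using box rW by auto
  moreover have "r \<noteq> N" using rW nc by auto
  ultimately have rN: "r < N" by simp
  have "t \<le> M" using box tW by auto
  moreover have "t \<noteq> M" using tW nc by auto
  ultimately have tM: "t < M" by simp
  define s where "s = (t, r)"
  have key: "t < fst p \<or> r < snd p" if "p \<in> W" "p \<noteq> s" for p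
  proof (rule ccontr)
    assume "\<not> (t < fst p \<or> r < snd p)"
    then have "fst p \<le> t" "snd p \<le> r" by auto
    then show False
      using quad_noextra[OF cp em rW tW that(1) rW, of s] that(2) tM rN
      by (auto simp: s_def)
  qed
  have c10: "(M, b0) \<in> W"
  proof (rule ccontr)
    assume nB: "(M, b0) \<notin> W"
    define r' where "r' = Min {n. (M, n) \<in> W}"
    have r'W: "(M, r') \<in> W" using colmin[OF fin n1] unfolding r'_def by auto
    have "r' \<le> r" using rmax r'W by blast
    have "b0 \<le> r'" using box r'W by auto
    moreover have "r' \<noteq> b0" using r'W nB by auto
    ultimately have b0r': "b0 < r'" by simp
    define b' where "b' = Max {m. (m, b0) \<in> W}"
    have b'W: "(b', b0) \<in> W" using rowmax[OF fin m0] unfolding b'_def by auto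
    have "b' \<le> M" using box b'W by auto
    moreover have "b' \<noteq> M" using b'W nB by auto
    ultimately have b'M: "b' < M" by simp
    have "(b', b0) \<noteq> s" using \<open>r' \<le> r\<close> b0r' by (auto simp: s_def)
    then have "t < b'" using key[OF b'W] \<open>r' \<le> r\<close> b0r' by auto
    then show False
      using quad_noextra[OF cp em r'W tW b'W r'W, of "(b', r')"] b'M b0r' \<open>r' \<le> r\<close> rN
      by auto
  qed
  have c01: "(a0, N) \<in> W"
  proof (rule ccontr)
    assume nA: "(a0, N) \<notin> W"
    define t'' where "t'' = Min {m. (m, N) \<in> W}"
    have t''W: "(t'', N) \<in> W" using rowmin[OF fin m1] unfolding t''_def by auto
    have "t'' \<le> t" using tmax t''W by blast
    have "a0 \<le> t''" using box t''W by auto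
    moreover have "t'' \<noteq> a0" using t''W nA by auto
    ultimately have a0t'': "a0 < t''" by simp
    define l'' where "l'' = Max {n. (a0, n) \<in> W}"
    have l''W: "(a0, l'') \<in> W" using colmax[OF fin n0] unfolding l''_def by auto
    have "l'' \<le> N" using box l''W by auto
    moreover have "l'' \<noteq> N" using l''W nA by auto
    ultimately have l''N: "l'' < N" by simp
    have "(a0, l'') \<noteq> s" using \<open>t'' \<le> t\<close> a0t'' by (auto simp: s_def)
    then have "r < l''" using key[OF l''W] \<open>t'' \<le> t\<close> a0t'' by auto
    then show False
      using quad_noextra[OF cp em t''W l''W l''W rW, of "(t'', l'')"] a0t'' l''N \<open>t'' \<le> t\<close> tM
      by auto
  qed
  show ?thesis using c01 c10 by simp
qed

end

context explat begin

lemma powmono: "m \<le> n \<Longrightarrow> \<alpha> ^ m \<le> \<alpha> ^ n"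
  by simp

lemma hsegP: "a \<le> b \<Longrightarrow> b \<le> c \<Longrightarrow> P (b, n) \<in> closed_segment (P (a, n)) (P (c, n))"
  unfolding P_def by simp (rule hseg; simp)

lemma vsegP: "a \<le> b \<Longrightarrow> b \<le> c \<Longrightarrow> P (m, b) \<in> closed_segment (P (m, a)) (P (m, c))"
  unfolding P_def by simp (rule vseg; simp)

lemma card_ins: "finite A \<Longrightarrow> card (insert x A) \<le> Suc (card A)"
  by (simp add: card_insert_if)

lemma card4: "card {a, b, c, d} \<le> 4"
proof -
  have "card {a, b, c, d} \<le> Suc (card {b, c, d})" by (rule card_ins) simp
  also have "card {b, c, d} \<le> Suc (card {c, d})" by (rule card_ins) simp
  also have "card {c, d} \<le> Suc (card {d})" by (rule card_ins) simp
  finally show ?thesis by simp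
qed

lemma segnx:
  assumes cp: "cpos W" and em: "empt W" and "u \<in> W" "v \<in> W" "z \<noteq> u" "z \<noteq> v"
    and "P z \<in> closed_segment (P u) (P v)"
  shows False
proof -
  have "P z \<in> convex hull (P ` {u, v})" using assms(7) by (simp add: segment_convex_hull)
  then show False using noextra[OF cp em, of "{u, v}" z] assms by auto
qed

lemma trinx:
  assumes cp: "cpos W" and em: "empt W" and "a \<in> W" "b \<in> W" "u \<in> W"
    and "z \<noteq> a" "z \<noteq> b" "z \<noteq> u"
    and "e \<in> closed_segment (P a) (P b)" "P z \<in> closed_segment (P u) e"
  shows False
proof -
  have H: "P ` {a, b, u} \<subseteq> convex hull (P ` {a, b, u})" by (rule hull_subset)
  have "e \<in> convex hull (P ` {a, b, u})"
    by (rule seg_hull[OF _ _ assms(9)]) (use H in auto)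
  then have "P z \<in> convex hull (P ` {a, b, u})"
    by (rule seg_hull[OF _ _ assms(10), rotated]) (use H in auto)
  then show False using noextra[OF cp em, of "{a, b, u}" z] assms by auto
qed

lemma rowbound:
  fixes R :: "nat set" and c K :: real
  assumes fin: "finite R" and K: "K > 0" and c: "c > 0"
    and lo: "\<forall>n\<in>R. K * (\<alpha> - 1) < c * \<alpha> ^ n * \<alpha>"
    and hi: "\<forall>n\<in>R. c * \<alpha> ^ n * \<alpha> \<le> K"
    and kk: "\<alpha> / (\<alpha> - 1) \<le> \<alpha> ^ k"
  shows "card R + 1 \<le> k"
proof (cases "R = {}")
  case True
  have "\<alpha> / (\<alpha> - 1) > 1" using a1 by (simp add: field_simps)
  then have "\<alpha> ^ k > \<alpha> ^ 0" using kk by simp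
  then have "k > 0" using pow_less_iff by blast
  then show ?thesis using True by simp
next
  case False
  define nmin where "nmin = Min R"
  define nmax where "nmax = Max R"
  have nminR: "nmin \<in> R" and nmaxR: "nmax \<in> R" using fin False by (auto simp: nmin_def nmax_def)
  have sub: "R \<subseteq> {nmin..nmax}" using fin by (auto simp: nmin_def nmax_def)
  have le: "nmin \<le> nmax" using sub nminR by auto
  define d where "d = nmax - nmin"
  have "card R \<le> card {nmin..nmax}" using sub by (intro card_mono) auto
  then have cardR: "card R \<le> d + 1" using le by (simp add: d_def)
  have e: "\<alpha> ^ nmax = \<alpha> ^ nmin * \<alpha> ^ d" using le by (simp add: d_def power_add[symmetric])
  have a0: "\<alpha> > 0" "\<alpha> - 1 > 0" using a1 by auto
  have l1: "K * (\<alpha> - 1) < c * \<alpha> ^ nmin * \<alpha>" using lo nminR by blast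
  have "K * (\<alpha> - 1) * \<alpha> ^ d < c * \<alpha> ^ nmin * \<alpha> * \<alpha> ^ d"
    by (rule mult_strict_right_mono[OF l1 pow_pos])
  also have "\<dots> = c * \<alpha> ^ nmax * \<alpha>" using e by (simp add: algebra_simps)
  also have "\<dots> \<le> K" using hi nmaxR by simp
  finally have "K * ((\<alpha> - 1) * \<alpha> ^ d) < K * 1" by (simp add: algebra_simps)
  then have "(\<alpha> - 1) * \<alpha> ^ d < 1" using K by (simp only: mult_less_cancel_left_pos)
  then have "\<alpha> ^ d < 1 / (\<alpha> - 1)" using a0 by (simp add: field_simps)
  then have "\<alpha> * \<alpha> ^ d < \<alpha> * (1 / (\<alpha> - 1))" using a0 by (intro mult_strict_left_mono) auto
  then have "\<alpha> ^ (d + 1) < \<alpha> / (\<alpha> - 1)" by (simp add: mult.commute)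
  then have "\<alpha> ^ (d + 1) < \<alpha> ^ k" using kk by simp
  then have "d + 1 < k" using pow_less_iff by blast
  then show ?thesis using cardR by simp
qed

lemma card_pair1: "\<not> (a \<in> W \<and> b \<in> W) \<Longrightarrow> card (W \<inter> {a, b}) \<le> 1"
proof -
  assume h: "\<not> (a \<in> W \<and> b \<in> W)"
  have "W \<inter> {a, b} \<subseteq> {a} \<or> W \<inter> {a, b} \<subseteq> {b}" using h by auto
  then show ?thesis by (metis card.empty card.insert empty_iff finite.emptyI le_SucI card_mono
        finite.insertI insert_absorb2 le_numeral_extra(4) One_nat_def)
qed

lemma GNT:
  assumes fin: "finite W" and cp: "cpos W" and em: "empt W"
    and box: "\<forall>w\<in>W. p0 \<le> fst w \<and> fst w \<le> P1 \<and> q0 \<le> snd w \<and> snd w \<le> Q1"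
    and AW: "(p0, Q1) \<in> W" and BW: "(P1, q0) \<in> W"
    and kk: "\<alpha> / (\<alpha> - 1) \<le> \<alpha> ^ k"
  shows "card W \<le> 2 * k + 3"
proof -
  have k1: "1 \<le> k" using rowbound[of "{}" 1 1 k] kk by simp
  show ?thesis
  proof (cases "P1 \<le> p0 + 1 \<and> Q1 \<le> q0 + 1")
    case True
    have "W \<subseteq> {(p0, q0), (p0, q0 + 1), (p0 + 1, q0), (p0 + 1, q0 + 1)}"
    proof
      fix w assume wW: "w \<in> W"
      have "fst w = p0 \<or> fst w = p0 + 1" "snd w = q0 \<or> snd w = q0 + 1"
        using box wW True by force+
      then show "w \<in> {(p0, q0), (p0, q0 + 1), (p0 + 1, q0), (p0 + 1, q0 + 1)}"
        by (cases w) auto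
    qed
    then have "card W \<le> card {(p0, q0), (p0, q0 + 1), (p0 + 1, q0), (p0 + 1, q0 + 1)}"
      by (intro card_mono) auto
    also have "\<dots> \<le> 4" by (rule card4)
    finally show ?thesis using k1 by simp
  next
    case nsmall: False
    have p0P1: "p0 \<le> P1" and q0Q1: "q0 \<le> Q1" using box AW by auto
    show ?thesis
    proof (cases "P1 = p0 \<or> Q1 = q0")
      case True
      have "W \<subseteq> {(p0, Q1), (P1, q0)}"
      proof
        fix w assume wW: "w \<in> W"
        obtain m n where w: "w = (m, n)" by (cases w)
        show "w \<in> {(p0, Q1), (P1, q0)}"
        proof (rule ccontr)
          assume nw: "w \<notin> {(p0, Q1), (P1, q0)}"
          from True show False
          proof
            assume e: "P1 = p0"
            then have m: "m = p0" using box wW w by force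
            have "q0 \<le> n" "n \<le> Q1" using box wW w by auto
            moreover have "n \<noteq> Q1" "n \<noteq> q0" using nw m e w by auto
            ultimately have "q0 < n" "n < Q1" by auto
            then have "P w \<in> closed_segment (P (P1, q0)) (P (p0, Q1))"
              using vsegP[of q0 n Q1 p0] e m w by simp
            then show False using segnx[OF cp em BW AW, of w] nw by auto
          next
            assume e: "Q1 = q0"
            then have n: "n = Q1" using box wW w by force
            have "p0 \<le> m" "m \<le> P1" using box wW w by auto
            moreover have "m \<noteq> p0" "m \<noteq> P1" using nw n e w by auto
            ultimately have "p0 < m" "m < P1" by auto
            then have "P w \<in> closed_segment (P (p0, Q1)) (P (P1, q0))"
              using hsegP[of p0 m P1 Q1] e n w by simp
            then show False using segnx[OF cp em AW BW, of w] nw by auto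
          qed
        qed
      qed
      then have "card W \<le> card {(p0, Q1), (P1, q0)}" by (intro card_mono) auto
      also have "\<dots> \<le> 2" by (simp add: card_insert_if)
      finally show ?thesis by simp
    next
      case False
      then have lt1: "p0 < P1" and lt2: "q0 < Q1" using p0P1 q0Q1 by auto
      define A where "A = (p0, Q1)"
      define B where "B = (P1, q0)"
      define xA where "xA = \<alpha> ^ p0"
      define yA where "yA = \<alpha> ^ Q1"
      define xB where "xB = \<alpha> ^ P1"
      define yB where "yB = \<alpha> ^ q0"
      define dx where "dx = xB - xA"
      define dy where "dy = yA - yB"
      define K where "K = dx * yB + dy * xB"
      have AW': "A \<in> W" and BW': "B \<in> W" using AW BW by (auto simp: A_def B_def)
      have PA: "P A = (xA, yA)" and PB: "P B = (xB, yB)" by (auto simp: P_def A_def B_def xA_def yA_def xB_def yB_def)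
      have dxp: "dx > 0" using lt1 by (simp add: dx_def xA_def xB_def)
      have dyp: "dy > 0" using lt2 by (simp add: dy_def yA_def yB_def)
      have xBp: "xB > 0" and yBp: "yB > 0" and xAp: "xA > 0" and yAp: "yA > 0"
        by (auto simp: xB_def yB_def xA_def yA_def pow_pos)
      have Kp: "K > 0" using dxp dyp xBp yBp by (simp add: K_def add_pos_pos)
      have KA: "dx * yA + dy * xA = K" by (simp add: K_def dx_def dy_def algebra_simps)
      have dyxB: "dy * xB \<le> K" using dxp yBp by (simp add: K_def)
      have dxyA: "dx * yA \<le> K" using dyp xAp KA by (metis le_add_same_cancel1 less_eq_real_def mult_pos_pos)
      have chordh: "\<exists>e\<in>closed_segment (P A) (P B). snd e = y \<and> dx * y + dy * fst e = K"
        if yy: "yB \<le> y" "y \<le> yA" for y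
      proof -
        obtain u where u: "0 \<le> u" "u \<le> 1" "snd ((1 - u) *\<^sub>R P A + u *\<^sub>R P B) = y"
          using cross_h[of "P B" y "P A"] yy PA PB by auto
        define e where "e = (1 - u) *\<^sub>R P A + u *\<^sub>R P B"
        have es: "e \<in> closed_segment (P A) (P B)" using u by (auto simp: e_def in_segment)
        have "dx * snd e + dy * fst e = (1 - u) * (dx * yA + dy * xA) + u * (dx * yB + dy * xB)"
          by (simp add: e_def PA PB algebra_simps)
        also have "\<dots> = K" using KA by (simp add: K_def algebra_simps)
        finally have ee: "dx * snd e + dy * fst e = K" .
        have "snd e = y" using u(3) by (simp add: e_def)
        then show ?thesis using es ee by (intro bexI[OF _ es]) auto
      qed
      have chordv: "\<exists>e\<in>closed_segment (P A) (P B). fst e = x \<and> dx * snd e + dy * x = K"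
        if xx: "xA \<le> x" "x \<le> xB" for x
      proof -
        obtain u where u: "0 \<le> u" "u \<le> 1" "fst ((1 - u) *\<^sub>R P B + u *\<^sub>R P A) = x"
          using cross_v[of "P A" x "P B"] xx PA PB by auto
        define e where "e = (1 - u) *\<^sub>R P B + u *\<^sub>R P A"
        have es: "e \<in> closed_segment (P A) (P B)" using u
          by (auto simp: e_def in_segment closed_segment_commute[of "P A"])
        have "dx * snd e + dy * fst e = (1 - u) * (dx * yB + dy * xB) + u * (dx * yA + dy * xA)"
          by (simp add: e_def PA PB algebra_simps)
        also have "\<dots> = K" using KA by (simp add: K_def algebra_simps)
        finally have ee: "dx * snd e + dy * fst e = K" .
        have "fst e = x" using u(3) by (simp add: e_def)
        then show ?thesis using es ee by (intro bexI[OF _ es]) auto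
      qed
      define EA where "EA = {(p0 + 1, Q1), (p0, Q1 - 1)}"
      define EB where "EB = {(P1 - 1, q0), (P1, q0 + 1)}"
      define J where "J = {w \<in> W. p0 < fst w \<and> fst w < P1 \<and> q0 < snd w \<and> snd w < Q1}"
      have cls: "w = A \<or> w = B \<or> w \<in> W \<inter> EA \<or> w \<in> W \<inter> EB \<or> w \<in> J" if wW: "w \<in> W" for w
      proof -
        obtain m n where w: "w = (m, n)" by (cases w)
        have rng: "p0 \<le> m" "m \<le> P1" "q0 \<le> n" "n \<le> Q1" using box wW w by auto
        show ?thesis
        proof (cases "n = Q1")
          case nQ: True
          show ?thesis
          proof (cases "m \<le> p0 + 1")
            case True
            then have "m = p0 \<or> m = p0 + 1" using rng by auto
            then show ?thesis using nQ w wW by (auto simp: A_def EA_def)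
          next
            case False
            have sg: "P (p0 + 1, Q1) \<in> closed_segment (P A) (P w)"
              using hsegP[of p0 "p0 + 1" m Q1] False nQ w by (simp add: A_def)
            have "(p0 + 1, Q1) \<noteq> A" "(p0 + 1, Q1) \<noteq> w" using False w by (auto simp: A_def)
            then have False using segnx[OF cp em AW' wW _ _ sg] by blast
            then show ?thesis by blast
          qed
        next
          case nQ: False
          show ?thesis
          proof (cases "m = p0")
            case mp: True
            show ?thesis
            proof (cases "n + 1 = Q1")
              case True
              then have "n = Q1 - 1" by simp
              then show ?thesis using mp w wW by (auto simp: EA_def)
            next
              case False
              then have n2: "n + 2 \<le> Q1" using nQ rng by simp
              then have sg: "P (p0, Q1 - 1) \<in> closed_segment (P w) (P A)"
                using vsegP[of n "Q1 - 1" Q1 p0] mp w by (simp add: A_def)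
              have "(p0, Q1 - 1) \<noteq> w" "(p0, Q1 - 1) \<noteq> A" using n2 w lt2 by (auto simp: A_def)
              then have False using segnx[OF cp em wW AW' _ _ sg] by blast
              then show ?thesis by blast
            qed
          next
            case mp: False
            show ?thesis
            proof (cases "n = q0")
              case nq: True
              show ?thesis
              proof (cases "P1 \<le> m + 1")
                case True
                then have "m = P1 \<or> m = P1 - 1" using rng by auto
                then show ?thesis using nq w wW by (auto simp: B_def EB_def)
              next
                case False
                then have sg: "P (P1 - 1, q0) \<in> closed_segment (P w) (P B)"
                  using hsegP[of m "P1 - 1" P1 q0] nq w by (simp add: B_def)
                have "(P1 - 1, q0) \<noteq> w" "(P1 - 1, q0) \<noteq> B" using False w lt1 by (auto simp: B_def)
                then have False using segnx[OF cp em wW BW' _ _ sg] by blast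
                then show ?thesis by blast
              qed
            next
              case nq: False
              show ?thesis
              proof (cases "m = P1")
                case mP: True
                show ?thesis
                proof (cases "n = q0 + 1")
                  case True
                  then show ?thesis using mP w wW by (auto simp: EB_def)
                next
                  case False
                  then have n2: "q0 + 2 \<le> n" using nq rng by simp
                  then have sg: "P (P1, q0 + 1) \<in> closed_segment (P B) (P w)"
                    using vsegP[of q0 "q0 + 1" n P1] mP w by (simp add: B_def)
                  have "(P1, q0 + 1) \<noteq> B" "(P1, q0 + 1) \<noteq> w" using n2 w by (auto simp: B_def)
                  then have False using segnx[OF cp em BW' wW _ _ sg] by blast
                  then show ?thesis by blast
                qed
              next
                case mP: False
                then have "w \<in> J" using rng nQ mp nq w wW by (auto simp: J_def)
                then show ?thesis by blast
              qed
            qed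
          qed
        qed
      qed
      have EA1: "card (W \<inter> EA) \<le> 1"
      proof -
        have "\<not> ((p0 + 1, Q1) \<in> W \<and> (p0, Q1 - 1) \<in> W)"
        proof
          assume h: "(p0 + 1, Q1) \<in> W \<and> (p0, Q1 - 1) \<in> W"
          have ne: "(p0 + 1, Q1 - 1) \<noteq> (P1, q0)" using nsmall lt2 by auto
          show False
            by (rule quad_noextra[OF cp em h[THEN conjunct1] h[THEN conjunct2] h[THEN conjunct2] BW,
                of "(p0 + 1, Q1 - 1)"]) (use ne lt1 lt2 in auto)
        qed
        then show ?thesis unfolding EA_def by (rule card_pair1)
      qed
      have EB1: "card (W \<inter> EB) \<le> 1"
      proof -
        have "\<not> ((P1 - 1, q0) \<in> W \<and> (P1, q0 + 1) \<in> W)"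
        proof
          assume h: "(P1 - 1, q0) \<in> W \<and> (P1, q0 + 1) \<in> W"
          have ne: "(P1 - 1, q0 + 1) \<noteq> (p0, Q1)" using nsmall lt1 by auto
          show False
            by (rule quad_noextra[OF cp em h[THEN conjunct2] AW h[THEN conjunct1] h[THEN conjunct1],
                of "(P1 - 1, q0 + 1)"]) (use ne lt1 lt2 in auto)
        qed
        then show ?thesis unfolding EB_def by (rule card_pair1)
      qed
      have finJ: "finite J" using fin by (simp add: J_def)
      have Jbasic: "w \<in> W" "p0 < fst w" "fst w < P1" "q0 < snd w" "snd w < Q1" if "w \<in> J" for w
        using that by (auto simp: J_def)
      have JnA: "w \<noteq> A" "w \<noteq> B" if "w \<in> J" for w
        using Jbasic[OF that] by (auto simp: A_def B_def)
      have yrng: "yB \<le> \<alpha> ^ snd w" "\<alpha> ^ snd w \<le> yA" if "w \<in> J" for w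
        using Jbasic[OF that] by (auto simp: yA_def yB_def)
      have xrng: "xA \<le> \<alpha> ^ fst w" "\<alpha> ^ fst w \<le> xB" if "w \<in> J" for w
        using Jbasic[OF that] by (auto simp: xA_def xB_def)
      have Pw: "P w = (\<alpha> ^ fst w, \<alpha> ^ snd w)" for w by (simp add: P_def)
      define sd where "sd w = dx * \<alpha> ^ snd w + dy * \<alpha> ^ fst w" for w
      have notchord: "sd w \<noteq> K" if wJ: "w \<in> J" for w
      proof
        assume eq: "sd w = K"
        obtain e where e: "e \<in> closed_segment (P A) (P B)" "snd e = \<alpha> ^ snd w"
          "dx * \<alpha> ^ snd w + dy * fst e = K"
          using chordh[OF yrng[OF wJ]] by blast
        have "dy * fst e = dy * \<alpha> ^ fst w" using e(3) eq unfolding sd_def by linarith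
        then have "fst e = \<alpha> ^ fst w" using dyp by simp
        then have "e = P w" using e(2) by (simp add: Pw prod_eq_iff)
        then show False using segnx[OF cp em AW' BW' JnA(1)[OF wJ] JnA(2)[OF wJ]] e(1) by simp
      qed
      define JU where "JU = {w \<in> J. sd w > K}"
      define JD where "JD = {w \<in> J. sd w < K}"
      have JUD: "J \<subseteq> JU \<union> JD" using notchord by (auto simp: JU_def JD_def) (meson linorder_neqE_linordered_idom)
      have finJU: "finite JU" and finJD: "finite JD" using finJ by (auto simp: JU_def JD_def)
      have JUrow: "False" if w1: "w1 \<in> JU" and w2: "w2 \<in> JU" and sn: "snd w1 = snd w2"
        and lt: "fst w1 < fst w2" for w1 w2
      proof -
        have w1J: "w1 \<in> J" and w2J: "w2 \<in> J" using w1 w2 by (auto simp: JU_def)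
        obtain e where e: "e \<in> closed_segment (P A) (P B)" "snd e = \<alpha> ^ snd w1"
          "dx * \<alpha> ^ snd w1 + dy * fst e = K"
          using chordh[OF yrng[OF w1J]] by blast
        have "dy * fst e < dy * \<alpha> ^ fst w1" using w1 e(3) by (simp add: JU_def sd_def)
        then have le1: "fst e \<le> \<alpha> ^ fst w1" using dyp by simp
        have le2: "\<alpha> ^ fst w1 \<le> \<alpha> ^ fst w2" using lt by simp
        have "(\<alpha> ^ fst w1, \<alpha> ^ snd w1) \<in> closed_segment (fst e, \<alpha> ^ snd w1) (\<alpha> ^ fst w2, \<alpha> ^ snd w1)"
          by (rule hseg[OF le1 le2])
        then have "P w1 \<in> closed_segment (P w2) e"
          using e(2) sn by (simp add: Pw closed_segment_commute prod_eq_iff)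
             (metis prod.collapse)
        moreover have "w1 \<noteq> w2" using lt by auto
        ultimately show False
          using trinx[OF cp em AW' BW' Jbasic(1)[OF w2J] JnA(1)[OF w1J] JnA(2)[OF w1J] _ e(1)] by blast
      qed
      have injU: "inj_on snd JU"
      proof (rule inj_onI)
        fix w1 w2 assume h: "w1 \<in> JU" "w2 \<in> JU" "snd w1 = snd w2"
        show "w1 = w2"
        proof (rule ccontr)
          assume "w1 \<noteq> w2"
          then have "fst w1 \<noteq> fst w2" using h(3) by (metis prod.expand)
          then show False using JUrow[OF h] JUrow[OF h(2) h(1) h(3)[symmetric]] by (metis linorder_neqE_nat)
        qed
      qed
      have hiJ: "dx * \<alpha> ^ snd w * \<alpha> \<le> K" if "w \<in> J" for w
      proof -
        have "\<alpha> ^ snd w * \<alpha> = \<alpha> ^ (snd w + 1)" by simp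
        also have "\<dots> \<le> yA" unfolding yA_def by (rule powmono) (use Jbasic[OF that] in simp)
        finally have "dx * (\<alpha> ^ snd w * \<alpha>) \<le> dx * yA" using dxp by simp
        then show ?thesis using dxyA by (simp add: mult.assoc)
      qed
      have cardJU: "card JU + 1 \<le> k"
      proof -
        have "card (snd ` JU) + 1 \<le> k"
        proof (rule rowbound[OF _ Kp dxp _ _ kk])
          show "finite (snd ` JU)" using finJU by simp
          show "\<forall>n\<in>snd ` JU. K * (\<alpha> - 1) < dx * \<alpha> ^ n * \<alpha>"
          proof
            fix n assume "n \<in> snd ` JU"
            then obtain w where wU: "w \<in> JU" and n: "n = snd w" by auto
            have wJ: "w \<in> J" using wU by (simp add: JU_def)
            have "\<alpha> ^ fst w * \<alpha> = \<alpha> ^ (fst w + 1)" by simp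
            also have "\<dots> \<le> xB" unfolding xB_def by (rule powmono) (use Jbasic[OF wJ] in simp)
            finally have "dy * (\<alpha> ^ fst w * \<alpha>) \<le> dy * xB" using dyp by simp
            then have a: "dy * \<alpha> ^ fst w * \<alpha> \<le> K" using dyxB by (simp add: mult.assoc)
            have "K < dx * \<alpha> ^ n + dy * \<alpha> ^ fst w" using wU n by (simp add: JU_def sd_def)
            then have "K * \<alpha> < (dx * \<alpha> ^ n + dy * \<alpha> ^ fst w) * \<alpha>" using a1 by simp
            then show "K * (\<alpha> - 1) < dx * \<alpha> ^ n * \<alpha>" using a by (simp add: algebra_simps)
          qed
          show "\<forall>n\<in>snd ` JU. dx * \<alpha> ^ n * \<alpha> \<le> K" using hiJ by (auto simp: JU_def)
        qed
        then show ?thesis using card_image[OF injU] by simp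
      qed
      have JDrow: "False" if w1: "w1 \<in> JD" and w2: "w2 \<in> JD" and sn: "snd w1 = snd w2"
        and lt: "fst w1 < fst w2" for w1 w2
      proof -
        have w1J: "w1 \<in> J" and w2J: "w2 \<in> J" using w1 w2 by (auto simp: JD_def)
        obtain e where e: "e \<in> closed_segment (P A) (P B)" "snd e = \<alpha> ^ snd w1"
          "dx * \<alpha> ^ snd w1 + dy * fst e = K"
          using chordh[OF yrng[OF w1J]] by blast
        have "dy * \<alpha> ^ fst w2 < dy * fst e" using w2 e(3) sn by (simp add: JD_def sd_def)
        then have le2: "\<alpha> ^ fst w2 \<le> fst e" using dyp by simp
        have le1: "\<alpha> ^ fst w1 \<le> \<alpha> ^ fst w2" using lt by simp
        have "(\<alpha> ^ fst w2, \<alpha> ^ snd w1) \<in> closed_segment (\<alpha> ^ fst w1, \<alpha> ^ snd w1) (fst e, \<alpha> ^ snd w1)"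
          by (rule hseg[OF le1 le2])
        then have "P w2 \<in> closed_segment (P w1) e"
          using e(2) sn by (simp add: Pw prod_eq_iff) (metis prod.collapse)
        moreover have "w2 \<noteq> w1" using lt by auto
        ultimately show False
          using trinx[OF cp em AW' BW' Jbasic(1)[OF w1J] JnA(1)[OF w2J] JnA(2)[OF w2J] _ e(1)] by blast
      qed
      have JDcol: "False" if w1: "w1 \<in> JD" and w2: "w2 \<in> JD" and sn: "fst w1 = fst w2"
        and lt: "snd w1 < snd w2" for w1 w2
      proof -
        have w1J: "w1 \<in> J" and w2J: "w2 \<in> J" using w1 w2 by (auto simp: JD_def)
        obtain e where e: "e \<in> closed_segment (P A) (P B)" "fst e = \<alpha> ^ fst w1"
          "dx * snd e + dy * \<alpha> ^ fst w1 = K"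
          using chordv[OF xrng[OF w1J]] by blast
        have "dx * \<alpha> ^ snd w2 < dx * snd e" using w2 e(3) sn by (simp add: JD_def sd_def)
        then have le2: "\<alpha> ^ snd w2 \<le> snd e" using dxp by simp
        have le1: "\<alpha> ^ snd w1 \<le> \<alpha> ^ snd w2" using lt by simp
        have "(\<alpha> ^ fst w1, \<alpha> ^ snd w2) \<in> closed_segment (\<alpha> ^ fst w1, \<alpha> ^ snd w1) (\<alpha> ^ fst w1, snd e)"
          by (rule vseg[OF le1 le2])
        then have "P w2 \<in> closed_segment (P w1) e"
          using e(2) sn by (simp add: Pw prod_eq_iff) (metis prod.collapse)
        moreover have "w2 \<noteq> w1" using lt by auto
        ultimately show False
          using trinx[OF cp em AW' BW' Jbasic(1)[OF w1J] JnA(1)[OF w2J] JnA(2)[OF w2J] _ e(1)] by blast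
      qed
      define JD1 where "JD1 = {w \<in> JD. fst w + 2 \<le> P1}"
      define JD2 where "JD2 = {w \<in> JD. \<not> fst w + 2 \<le> P1}"
      have finJD1: "finite JD1" and finJD2: "finite JD2" using finJD by (auto simp: JD1_def JD2_def)
      have injD1: "inj_on snd JD1"
      proof (rule inj_onI)
        fix w1 w2 assume h: "w1 \<in> JD1" "w2 \<in> JD1" "snd w1 = snd w2"
        have h': "w1 \<in> JD" "w2 \<in> JD" using h by (auto simp: JD1_def)
        show "w1 = w2"
        proof (rule ccontr)
          assume "w1 \<noteq> w2"
          then have "fst w1 \<noteq> fst w2" using h(3) by (metis prod.expand)
          then show False using JDrow[OF h'(1) h'(2) h(3)] JDrow[OF h'(2) h'(1) h(3)[symmetric]]
            by (metis linorder_neqE_nat)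
        qed
      qed
      have cardJD2: "card JD2 \<le> 1"
      proof -
        have "\<forall>w1\<in>JD2. \<forall>w2\<in>JD2. w1 = w2"
        proof (intro ballI)
          fix w1 w2 assume h: "w1 \<in> JD2" "w2 \<in> JD2"
          have h': "w1 \<in> JD" "w2 \<in> JD" using h by (auto simp: JD2_def)
          have "fst w1 = P1 - 1" "fst w2 = P1 - 1"
            using h Jbasic[of w1] Jbasic[of w2] by (auto simp: JD2_def JD_def)
          then have f: "fst w1 = fst w2" by simp
          show "w1 = w2"
          proof (rule ccontr)
            assume "w1 \<noteq> w2"
            then have "snd w1 \<noteq> snd w2" using f by (metis prod.expand)
            then show False using JDcol[OF h'(1) h'(2) f] JDcol[OF h'(2) h'(1) f[symmetric]]
              by (metis linorder_neqE_nat)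
          qed
        qed
        then show ?thesis using finJD2 by (simp add: card_le_Suc0_iff_eq)
      qed
      have cardJD1: "card JD1 + 1 \<le> k"
      proof -
        have "card (snd ` JD1) + 1 \<le> k"
        proof (rule rowbound[OF _ Kp dxp _ _ kk])
          show "finite (snd ` JD1)" using finJD1 by simp
          show "\<forall>n\<in>snd ` JD1. K * (\<alpha> - 1) < dx * \<alpha> ^ n * \<alpha>"
          proof
            fix n assume "n \<in> snd ` JD1"
            then obtain w where wD: "w \<in> JD1" and n: "n = snd w" by auto
            have wJ: "w \<in> J" and w2: "fst w + 2 \<le> P1" using wD by (auto simp: JD1_def JD_def)
            define z where "z = (fst w + 1, snd w)"
            have gt: "K < dx * \<alpha> ^ snd w + dy * \<alpha> ^ (fst w + 1)"
            proof (rule ccontr)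
              assume "\<not> ?thesis"
              then have le: "dx * \<alpha> ^ snd w + dy * \<alpha> ^ (fst w + 1) \<le> K" by simp
              obtain e where e: "e \<in> closed_segment (P A) (P B)" "snd e = \<alpha> ^ snd w"
                "dx * \<alpha> ^ snd w + dy * fst e = K"
                using chordh[OF yrng[OF wJ]] by blast
              have "dy * \<alpha> ^ (fst w + 1) \<le> dy * fst e" using le e(3) by simp
              then have le2: "\<alpha> ^ (fst w + 1) \<le> fst e" using dyp by simp
              have le1: "\<alpha> ^ fst w \<le> \<alpha> ^ (fst w + 1)" by (rule powmono) simp
              have "(\<alpha> ^ (fst w + 1), \<alpha> ^ snd w) \<in> closed_segment (\<alpha> ^ fst w, \<alpha> ^ snd w) (fst e, \<alpha> ^ snd w)"
                by (rule hseg[OF le1 le2])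
              then have "P z \<in> closed_segment (P w) e"
                using e(2) unfolding z_def P_def by (simp only: fst_conv snd_conv) (metis prod.collapse)
              moreover have "z \<noteq> A" "z \<noteq> B" "z \<noteq> w" using Jbasic[OF wJ] by (auto simp: z_def A_def B_def prod_eq_iff)
              ultimately show False
                using trinx[OF cp em AW' BW' Jbasic(1)[OF wJ] _ _ _ e(1)] by blast
            qed
            have "\<alpha> ^ (fst w + 1) * \<alpha> = \<alpha> ^ (fst w + 2)" by simp
            also have "\<dots> \<le> xB" unfolding xB_def by (rule powmono) (use w2 in simp)
            finally have "dy * (\<alpha> ^ (fst w + 1) * \<alpha>) \<le> dy * xB" using dyp by simp
            then have a: "dy * \<alpha> ^ (fst w + 1) * \<alpha> \<le> K" using dyxB by (simp add: mult.assoc)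
            have "K * \<alpha> < (dx * \<alpha> ^ snd w + dy * \<alpha> ^ (fst w + 1)) * \<alpha>" using gt a1 by simp
            then show "K * (\<alpha> - 1) < dx * \<alpha> ^ n * \<alpha>" using a n by (simp add: algebra_simps)
          qed
          show "\<forall>n\<in>snd ` JD1. dx * \<alpha> ^ n * \<alpha> \<le> K" using hiJ by (auto simp: JD1_def JD_def)
        qed
        then show ?thesis using card_image[OF injD1] by simp
      qed
      have Wsub: "W \<subseteq> {A, B} \<union> (W \<inter> EA) \<union> (W \<inter> EB) \<union> JU \<union> JD1 \<union> JD2"
      proof
        fix w assume wW: "w \<in> W"
        have "w \<in> JD \<Longrightarrow> w \<in> JD1 \<union> JD2" by (auto simp: JD1_def JD2_def)
        then show "w \<in> {A, B} \<union> (W \<inter> EA) \<union> (W \<inter> EB) \<union> JU \<union> JD1 \<union> JD2"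
          using cls[OF wW] JUD by blast
      qed
      have "card W \<le> card ({A, B} \<union> (W \<inter> EA) \<union> (W \<inter> EB) \<union> JU \<union> JD1 \<union> JD2)"
        by (rule card_mono[OF _ Wsub]) (use fin finJU finJD1 finJD2 in auto)
      also have "\<dots> \<le> card {A, B} + card (W \<inter> EA) + card (W \<inter> EB) + card JU + card JD1 + card JD2"
        by (rule order_trans[OF card_Un_le] add_mono)+ simp_all
      also have "\<dots> \<le> 2 + 1 + 1 + (k - 1) + (k - 1) + 1"
        using EA1 EB1 cardJU cardJD1 cardJD2 by (intro add_mono) (auto simp: card_insert_if)
      also have "\<dots> = 2 * k + 3" using k1 by simp
      finally show ?thesis .
    qed
  qed
qed

end

lemma segpt:
  fixes p q :: "real \<times> real"
  assumes "0 \<le> t" "t \<le> 1"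
  shows "(fst p + t * (fst q - fst p), snd p + t * (snd q - snd p)) \<in> closed_segment p q"
proof -
  have "(fst p + t * (fst q - fst p), snd p + t * (snd q - snd p)) = (1 - t) *\<^sub>R p + t *\<^sub>R q"
    by (simp add: prod_eq_iff algebra_simps)
  then show ?thesis using assms by (auto simp: in_segment)
qed

lemma alg1:
  fixes X0 Y0 X1 Y1 a t :: real
  assumes "X0 > 0" "Y0 > 0" "X0 < X1" "Y0 < Y1" "X0 * Y1 \<le> X1 * Y0" "a \<ge> 1"
    and t: "t = (a * Y0 - Y0) / (Y1 - Y0)"
  shows "a * X0 \<le> X0 + t * (X1 - X0)"
proof -
  have d: "Y1 - Y0 > 0" using assms by simp
  have "t * (Y1 - Y0) = a * Y0 - Y0" using d by (simp add: t)
  then have tY: "t * (Y1 - Y0) = (a - 1) * Y0" by (simp add: algebra_simps)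
  have "(a - 1) * X0 * (Y1 - Y0) \<le> (a - 1) * Y0 * (X1 - X0)"
  proof -
    have "(a - 1) * Y0 * (X1 - X0) - (a - 1) * X0 * (Y1 - Y0) = (a - 1) * (X1 * Y0 - X0 * Y1)"
      by (simp add: algebra_simps)
    moreover have "(a - 1) * (X1 * Y0 - X0 * Y1) \<ge> 0" using assms by simp
    ultimately show ?thesis by linarith
  qed
  also have "\<dots> = (t * (Y1 - Y0)) * (X1 - X0)" using tY by simp
  also have "\<dots> = t * (X1 - X0) * (Y1 - Y0)" by (simp add: algebra_simps)
  finally have "(a - 1) * X0 \<le> t * (X1 - X0)" using d by (simp add: mult_le_cancel_right_pos)
  then show ?thesis by (simp add: algebra_simps)
qed

lemma alg2:
  fixes X0 Y0 X1 Y1 x t :: real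
  assumes "X0 < X1" "X0 * Y1 \<le> X1 * Y0" "t \<ge> 0"
    and x: "x = X0 + t * (X1 - X0)"
  shows "(Y0 + t * (Y1 - Y0)) * X0 \<le> Y0 * x"
proof -
  have "Y0 * x - (Y0 + t * (Y1 - Y0)) * X0 = t * (X1 * Y0 - X0 * Y1)"
    by (simp add: x algebra_simps)
  moreover have "t * (X1 * Y0 - X0 * Y1) \<ge> 0" using assms by simp
  ultimately show ?thesis by linarith
qed

lemma alg3:
  fixes X0 Y0 X1 Y1 a t x1 y1 :: real
  assumes "X0 > 0" "Y0 > 0" "X0 < X1" "Y0 < Y1" "X0 * Y1 \<le> X1 * Y0" "a \<ge> 1"
    and X1: "X1 = a * x1" and Y1: "Y1 = a * y1" and t: "t = (y1 - Y0) / (Y1 - Y0)"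
  shows "X0 + t * (X1 - X0) \<le> x1"
proof -
  have d: "Y1 - Y0 > 0" using assms by simp
  have tY: "t * (Y1 - Y0) = y1 - Y0" using d by (simp add: t)
  have a0: "a > 0" using assms by simp
  have "a * (X0 * y1) \<le> a * (Y0 * x1)" using assms(5) X1 Y1 by (simp add: algebra_simps)
  then have c: "X0 * y1 \<le> Y0 * x1" using a0 by simp
  have "(X0 + t * (X1 - X0)) * (Y1 - Y0) = X0 * (Y1 - Y0) + (X1 - X0) * (t * (Y1 - Y0))"
    by (simp add: algebra_simps)
  also have "\<dots> = X0 * (Y1 - Y0) + (y1 - Y0) * (X1 - X0)" using tY by simp
  also have "\<dots> = x1 * (Y1 - Y0) - (a - 1) * (Y0 * x1 - X0 * y1)"
    by (simp add: X1 Y1 algebra_simps)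
  also have "\<dots> \<le> x1 * (Y1 - Y0)" using c assms(6) by simp
  finally show ?thesis using d by (simp add: mult_le_cancel_right_pos)
qed

lemma alg4:
  fixes X0 Y0 X1 Y1 x t :: real
  assumes "X0 * Y1 \<le> X1 * Y0" "t \<le> 1"
    and x: "x = X0 + t * (X1 - X0)"
  shows "Y1 * x \<le> (Y0 + t * (Y1 - Y0)) * X1"
proof -
  have "(Y0 + t * (Y1 - Y0)) * X1 - Y1 * x = (1 - t) * (X1 * Y0 - X0 * Y1)"
    by (simp add: x algebra_simps)
  moreover have "(1 - t) * (X1 * Y0 - X0 * Y1) \<ge> 0" using assms by simp
  ultimately show ?thesis by linarith
qed

lemma proj_hull:
  fixes S :: "(real \<times> real) set" and c1 c2 :: real
  assumes fin: "finite S" and pos: "\<forall>p\<in>S. snd p > 0" and z: "z \<in> convex hull S"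
  shows "(c1 * fst z / snd z, c2 / snd z) \<in> convex hull ((\<lambda>p. (c1 * fst p / snd p, c2 / snd p)) ` S)"
proof -
  obtain u where u: "\<forall>x\<in>S. 0 \<le> u x" "sum u S = 1" "(\<Sum>x\<in>S. u x *\<^sub>R x) = z"
    using z convex_hull_finite[OF fin] by auto
  have fz: "fst z = (\<Sum>x\<in>S. u x * fst x)" using u(3) by (auto simp: fst_sum)
  have sz: "snd z = (\<Sum>x\<in>S. u x * snd x)" using u(3) by (auto simp: snd_sum)
  have "\<exists>x\<in>S. u x > 0"
  proof (rule ccontr)
    assume "\<not> ?thesis"
    then have "\<forall>x\<in>S. u x = 0" using u(1) by force
    then have "sum u S = 0" by simp
    then show False using u(2) by simp
  qed
  then obtain x0 where x0: "x0 \<in> S" "u x0 > 0" by blast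
  have szp: "snd z > 0" unfolding sz
    by (rule sum_pos2[OF fin x0(1)]) (use x0 pos u(1) in auto)
  define w where "w x = u x * snd x / snd z" for x
  define f where "f p = (c1 * fst p / snd p, c2 / snd p)" for p :: "real \<times> real"
  have w1: "sum w S = 1"
  proof -
    have "sum w S = (\<Sum>x\<in>S. u x * snd x) / snd z" by (simp add: w_def sum_divide_distrib)
    then show ?thesis using sz szp by simp
  qed
  have w0: "w x \<ge> 0" if xS: "x \<in> S" for x
  proof -
    have "u x \<ge> 0" "snd x > 0" using u(1) pos xS by auto
    then show ?thesis unfolding w_def using szp by (intro divide_nonneg_pos mult_nonneg_nonneg) auto
  qed
  have "(\<Sum>x\<in>S. w x *\<^sub>R f x) = (c1 * fst z / snd z, c2 / snd z)"
  proof (rule prod_eqI)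
    have "fst (\<Sum>x\<in>S. w x *\<^sub>R f x) = (\<Sum>x\<in>S. c1 / snd z * (u x * fst x))"
      by (auto simp: fst_sum w_def f_def intro!: sum.cong) (use pos in force)
    also have "\<dots> = c1 / snd z * (\<Sum>x\<in>S. u x * fst x)" by (simp add: sum_distrib_left)
    also have "\<dots> = c1 * fst z / snd z" by (simp add: fz)
    finally show "fst (\<Sum>x\<in>S. w x *\<^sub>R f x) = fst (c1 * fst z / snd z, c2 / snd z)" by simp
    have "snd (\<Sum>x\<in>S. w x *\<^sub>R f x) = (\<Sum>x\<in>S. c2 / snd z * u x)"
      by (auto simp: snd_sum w_def f_def intro!: sum.cong) (use pos in force)
    also have "\<dots> = c2 / snd z * sum u S" by (simp add: sum_distrib_left)
    also have "\<dots> = c2 / snd z" by (simp add: u(2))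
    finally show "snd (\<Sum>x\<in>S. w x *\<^sub>R f x) = snd (c1 * fst z / snd z, c2 / snd z)" by simp
  qed
  moreover have "(\<Sum>x\<in>S. w x *\<^sub>R f x) \<in> convex hull (f ` S)"
    by (rule convex_sum[OF fin convex_convex_hull w1 w0], assumption) (auto intro: hull_subset[THEN subsetD])
  ultimately show ?thesis by (simp add: f_def)
qed

context explat begin

lemma pdiv: "n \<le> m \<Longrightarrow> \<alpha> ^ m / \<alpha> ^ n = \<alpha> ^ (m - n)"
  using a1 by (simp add: power_diff)

lemma hull_ge1: "convex hull (P ` W) \<subseteq> {p. 1 \<le> fst p \<and> 1 \<le> snd p}"
proof (rule hull_minimal)
  show "P ` W \<subseteq> {p. 1 \<le> fst p \<and> 1 \<le> snd p}" using a1 by (auto simp: P_def)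
  have "{p::real\<times>real. 1 \<le> fst p \<and> 1 \<le> snd p} = {p. 1 \<le> fst p} \<inter> {p. 1 \<le> snd p}" by auto
  moreover have "convex {p::real\<times>real. 1 \<le> fst p}"
    by (rule convexI) (auto, metis add_mono mult_left_mono mult.right_neutral)
  moreover have "convex {p::real\<times>real. 1 \<le> snd p}"
    by (rule convexI) (auto, metis add_mono mult_left_mono mult.right_neutral)
  ultimately show "convex {p::real\<times>real. 1 \<le> fst p \<and> 1 \<le> snd p}" by (metis convex_Int)
qed

lemma pos_claims:
  assumes fin: "finite W" and cp: "cpos W" and em: "empt W"
    and box: "\<forall>w\<in>W. a0 \<le> fst w \<and> fst w \<le> M \<and> b0 \<le> snd w \<and> snd w \<le> N"
    and AW: "(a0, b0) \<in> W" and BW: "(M, N) \<in> W"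
    and sh: "N + a0 < M + b0" and bN: "b0 < N"
  shows "\<forall>w\<in>W. snd w + a0 \<le> fst w + b0 \<and> N + fst w \<le> M + snd w"
proof -
  have aM: "a0 < M" using sh bN by linarith
  define X0 where "X0 = \<alpha> ^ a0"
  define Y0 where "Y0 = \<alpha> ^ b0"
  define X1 where "X1 = \<alpha> ^ M"
  define Y1 where "Y1 = \<alpha> ^ N"
  have X0p: "X0 > 0" and Y0p: "Y0 > 0" by (auto simp: X0_def Y0_def pow_pos)
  have X01: "X0 < X1" using aM by (simp add: X0_def X1_def)
  have Y01: "Y0 < Y1" using bN by (simp add: Y0_def Y1_def)
  have shr: "X0 * Y1 \<le> X1 * Y0"
  proof -
    have "X0 * Y1 = \<alpha> ^ (a0 + N)" by (simp add: X0_def Y1_def power_add)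
    also have "\<dots> \<le> \<alpha> ^ (M + b0)" by (rule powmono) (use sh in simp)
    also have "\<dots> = X1 * Y0" by (simp add: X1_def Y0_def power_add)
    finally show ?thesis .
  qed
  define A where "A = (a0, b0)"
  define B where "B = (M, N)"
  have AW': "A \<in> W" and BW': "B \<in> W" using AW BW by (auto simp: A_def B_def)
  have PA: "P A = (X0, Y0)" and PB: "P B = (X1, Y1)" by (auto simp: P_def A_def B_def X0_def Y0_def X1_def Y1_def)
  have a1': "\<alpha> \<ge> 1" using a1 by simp
  have chv: "\<exists>e\<in>closed_segment (P A) (P B). fst e = x \<and> (snd e) * X0 \<le> Y0 * x \<and> Y1 * x \<le> (snd e) * X1"
    if xx: "X0 \<le> x" "x \<le> X1" for x
  proof -
    define t where "t = (x - X0) / (X1 - X0)"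
    have t01: "0 \<le> t" "t \<le> 1" using xx X01 by (auto simp: t_def divide_simps)
    have xt: "x = X0 + t * (X1 - X0)" using X01 by (simp add: t_def)
    define e where "e = (X0 + t * (X1 - X0), Y0 + t * (Y1 - Y0))"
    have es: "e \<in> closed_segment (P A) (P B)" using segpt[OF t01, of "P A" "P B"] by (simp add: e_def PA PB)
    have "(snd e) * X0 \<le> Y0 * x" using alg2[OF X01 shr t01(1) xt] by (simp add: e_def)
    moreover have "Y1 * x \<le> (snd e) * X1" using alg4[OF shr t01(2) xt] by (simp add: e_def)
    ultimately show ?thesis using es xt by (intro bexI[OF _ es]) (auto simp: e_def)
  qed
  have c1: "snd w + a0 \<le> fst w + b0" if wW: "w \<in> W" for w
  proof (rule ccontr)
    assume "\<not> ?thesis"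
    then have lt: "fst w + b0 < snd w + a0" by simp
    obtain m n where w: "w = (m, n)" by (cases w)
    have rng: "a0 \<le> m" "m \<le> M" "b0 \<le> n" "n \<le> N" using box wW w by auto
    have nb: "b0 < n" using lt rng w by simp
    show False
    proof (cases "m = a0")
      case True
      define t where "t = (\<alpha> * Y0 - Y0) / (Y1 - Y0)"
      have aY: "\<alpha> * Y0 \<le> Y1"
      proof -
        have "\<alpha> * Y0 = \<alpha> ^ (b0 + 1)" by (simp add: Y0_def)
        also have "\<dots> \<le> Y1" unfolding Y1_def by (rule powmono) (use bN in simp)
        finally show ?thesis .
      qed
      have t01: "0 \<le> t" "t \<le> 1" using aY Y01 Y0p a1' by (auto simp: t_def divide_simps)
      define e where "e = (X0 + t * (X1 - X0), Y0 + t * (Y1 - Y0))"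
      have es: "e \<in> closed_segment (P A) (P B)" using segpt[OF t01, of "P A" "P B"] by (simp add: e_def PA PB)
      have se: "snd e = \<alpha> * Y0" using Y01 by (simp add: e_def t_def)
      have fe: "\<alpha> * X0 \<le> fst e" using alg1[OF X0p Y0p X01 Y01 shr a1' t_def] by (simp add: e_def)
      have f: "P (a0, b0 + 1) \<in> closed_segment (P A) (P w)"
        using vsegP[of b0 "b0 + 1" n a0] nb True w by (simp add: A_def)
      have Pf: "P (a0, b0 + 1) = (X0, \<alpha> * Y0)" by (simp add: P_def X0_def Y0_def)
      have Ps: "P (a0 + 1, b0 + 1) = (\<alpha> * X0, \<alpha> * Y0)" by (simp add: P_def X0_def Y0_def)
      have "(\<alpha> * X0, \<alpha> * Y0) \<in> closed_segment (X0, \<alpha> * Y0) (fst e, \<alpha> * Y0)"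
        by (rule hseg) (use fe X0p a1' in auto)
      then have s: "P (a0 + 1, b0 + 1) \<in> closed_segment (P (a0, b0 + 1)) e"
        using se Ps Pf by (metis prod.collapse)
      have H: "P ` {A, B, w} \<subseteq> convex hull (P ` {A, B, w})" by (rule hull_subset)
      have "P (a0, b0 + 1) \<in> convex hull (P ` {A, B, w})"
        by (rule seg_hull[OF _ _ f]) (use H in auto)
      moreover have "e \<in> convex hull (P ` {A, B, w})"
        by (rule seg_hull[OF _ _ es]) (use H in auto)
      ultimately have "P (a0 + 1, b0 + 1) \<in> convex hull (P ` {A, B, w})"
        using s seg_hull by blast
      moreover have "(a0 + 1, b0 + 1) \<notin> {A, B, w}" using sh True w by (auto simp: A_def B_def)
      ultimately show False using noextra[OF cp em, of "{A, B, w}" "(a0 + 1, b0 + 1)"] AW' BW' wW by auto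
    next
      case False
      then have am: "a0 < m" using rng by simp
      have xr: "X0 \<le> \<alpha> ^ m" "\<alpha> ^ m \<le> X1" using rng by (auto simp: X0_def X1_def)
      obtain e where es: "e \<in> closed_segment (P A) (P B)" and fe: "fst e = \<alpha> ^ m"
        and le: "(snd e) * X0 \<le> Y0 * \<alpha> ^ m" using chv[OF xr] by blast
      show False
      proof (cases "snd e \<le> \<alpha> ^ (n - 1)")
        case True
        have "(\<alpha> ^ m, \<alpha> ^ (n - 1)) \<in> closed_segment (\<alpha> ^ m, snd e) (\<alpha> ^ m, \<alpha> ^ n)"
          by (rule vseg[OF True]) simp
        then have "P (m, n - 1) \<in> closed_segment (P w) e"
          using fe w by (simp add: P_def closed_segment_commute) (metis prod.collapse)
        moreover have "(m, n - 1) \<noteq> A" "(m, n - 1) \<noteq> B" "(m, n - 1) \<noteq> w"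
          using am nb rng w by (auto simp: A_def B_def)
        ultimately show False using trinx[OF cp em AW' BW' wW _ _ _ es] by blast
      next
        case False
        then have "\<alpha> ^ (n - 1) * X0 < snd e * X0" using X0p by simp
        also have "\<dots> \<le> Y0 * \<alpha> ^ m" by (rule le)
        finally have "\<alpha> ^ (n - 1 + a0) < \<alpha> ^ (b0 + m)" by (simp add: X0_def Y0_def power_add)
        then have "n - 1 + a0 < b0 + m" using pow_less_iff by blast
        then show False using lt nb w by simp
      qed
    qed
  qed
  have c2: "N + fst w \<le> M + snd w" if wW: "w \<in> W" for w
  proof (rule ccontr)
    assume "\<not> ?thesis"
    then have lt: "M + snd w < N + fst w" by simp
    obtain m n where w: "w = (m, n)" by (cases w)
    have rng: "a0 \<le> m" "m \<le> M" "b0 \<le> n" "n \<le> N" using box wW w by auto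
    have nN: "n < N" using lt rng w by simp
    show False
    proof (cases "m = M")
      case True
      define x1 where "x1 = \<alpha> ^ (M - 1)"
      define y1 where "y1 = \<alpha> ^ (N - 1)"
      have X1e: "X1 = \<alpha> * x1" using aM by (simp add: X1_def x1_def power_Suc[symmetric])
      have Y1e: "Y1 = \<alpha> * y1" using bN by (simp add: Y1_def y1_def power_Suc[symmetric])
      define t where "t = (y1 - Y0) / (Y1 - Y0)"
      have Yy: "Y0 \<le> y1" unfolding Y0_def y1_def by (rule powmono) (use bN in simp)
      have yY: "y1 \<le> Y1" unfolding Y1_def y1_def by (rule powmono) simp
      have t01: "0 \<le> t" "t \<le> 1" using Yy yY Y01 by (auto simp: t_def divide_simps)
      define e where "e = (X0 + t * (X1 - X0), Y0 + t * (Y1 - Y0))"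
      have es: "e \<in> closed_segment (P A) (P B)" using segpt[OF t01, of "P A" "P B"] by (simp add: e_def PA PB)
      have se: "snd e = y1" using Y01 by (simp add: e_def t_def)
      have fe: "fst e \<le> x1" using alg3[OF X0p Y0p X01 Y01 shr a1' X1e Y1e t_def] by (simp add: e_def)
      have f: "P (M, N - 1) \<in> closed_segment (P w) (P B)"
        using vsegP[of n "N - 1" N M] nN True w by (simp add: B_def)
      have Pf: "P (M, N - 1) = (X1, y1)" by (simp add: P_def X1_def y1_def)
      have Ps: "P (M - 1, N - 1) = (x1, y1)" by (simp add: P_def x1_def y1_def)
      have xX: "x1 \<le> X1" unfolding X1_def x1_def by (rule powmono) simp
      have "(x1, y1) \<in> closed_segment (fst e, y1) (X1, y1)"
        by (rule hseg[OF fe xX])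
      then have s: "P (M - 1, N - 1) \<in> closed_segment e (P (M, N - 1))"
        using se Ps Pf by (metis prod.collapse)
      have H: "P ` {A, B, w} \<subseteq> convex hull (P ` {A, B, w})" by (rule hull_subset)
      have "P (M, N - 1) \<in> convex hull (P ` {A, B, w})"
        by (rule seg_hull[OF _ _ f]) (use H in auto)
      moreover have "e \<in> convex hull (P ` {A, B, w})"
        by (rule seg_hull[OF _ _ es]) (use H in auto)
      ultimately have "P (M - 1, N - 1) \<in> convex hull (P ` {A, B, w})"
        using s seg_hull by blast
      moreover have "(M - 1, N - 1) \<notin> {A, B, w}" using sh True w aM bN by (auto simp: A_def B_def)
      ultimately show False using noextra[OF cp em, of "{A, B, w}" "(M - 1, N - 1)"] AW' BW' wW by auto
    next
      case False
      then have mM: "m < M" using rng by simp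
      have xr: "X0 \<le> \<alpha> ^ m" "\<alpha> ^ m \<le> X1" using rng by (auto simp: X0_def X1_def)
      obtain e where es: "e \<in> closed_segment (P A) (P B)" and fe: "fst e = \<alpha> ^ m"
        and le: "Y1 * \<alpha> ^ m \<le> (snd e) * X1" using chv[OF xr] by blast
      show False
      proof (cases "\<alpha> ^ (n + 1) \<le> snd e")
        case True
        have "(\<alpha> ^ m, \<alpha> ^ (n + 1)) \<in> closed_segment (\<alpha> ^ m, \<alpha> ^ n) (\<alpha> ^ m, snd e)"
          by (rule vseg[OF _ True]) (rule powmono, simp)
        then have "P (m, n + 1) \<in> closed_segment (P w) e"
          using fe w by (simp only: P_def fst_conv snd_conv) (metis prod.collapse)
        moreover have "(m, n + 1) \<noteq> A" "(m, n + 1) \<noteq> B" "(m, n + 1) \<noteq> w"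
          using mM rng w by (auto simp: A_def B_def)
        ultimately show False using trinx[OF cp em AW' BW' wW _ _ _ es] by blast
      next
        case False
        have X1p: "X1 > 0" using X0p X01 by simp
        have "Y1 * \<alpha> ^ m \<le> snd e * X1" by (rule le)
        also have "\<dots> < \<alpha> ^ (n + 1) * X1" using False X1p by simp
        finally have "\<alpha> ^ (N + m) < \<alpha> ^ (n + 1 + M)" by (simp add: X1_def Y1_def power_add)
        then have "N + m < n + 1 + M" using pow_less_iff by blast
        then show False using lt w by simp
      qed
    qed
  qed
  show ?thesis using c1 c2 by blast
qed

end

context explat begin

lemma pos_shallow:
  assumes fin: "finite W" and cp: "cpos W" and em: "empt W"
    and box: "\<forall>w\<in>W. a0 \<le> fst w \<and> fst w \<le> M \<and> b0 \<le> snd w \<and> snd w \<le> N"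
    and AW: "(a0, b0) \<in> W" and BW: "(M, N) \<in> W"
    and sh: "N + a0 < M + b0" and bN: "b0 < N"
    and kk: "\<alpha> / (\<alpha> - 1) \<le> \<alpha> ^ k"
  shows "card W \<le> 2 * k + 3"
proof -
  have cl: "\<forall>w\<in>W. snd w + a0 \<le> fst w + b0 \<and> N + fst w \<le> M + snd w"
    by (rule pos_claims[OF fin cp em box AW BW sh bN])
  define g where "g w = (fst w + b0 - (snd w + a0), N - snd w)" for w :: "nat \<times> nat"
  define W' where "W' = g ` W"
  define \<kappa> where "\<kappa> = \<alpha> ^ b0 / \<alpha> ^ a0"
  define T where "T p = (\<kappa> * fst p / snd p, \<alpha> ^ N / snd p)" for p :: "real \<times> real"
  define Ti where "Ti p = ((\<alpha> ^ N / \<kappa>) * fst p / snd p, \<alpha> ^ N / snd p)" for p :: "real \<times> real"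
  have kp: "\<kappa> > 0" by (simp add: \<kappa>_def pow_pos)
  have TP: "T (P w) = P (g w)" if wW: "w \<in> W" for w
  proof -
    have c: "snd w + a0 \<le> fst w + b0" "snd w \<le> N" using cl box wW by auto
    have "\<kappa> * \<alpha> ^ fst w / \<alpha> ^ snd w = \<alpha> ^ (fst w + b0) / \<alpha> ^ (snd w + a0)"
      by (simp add: \<kappa>_def power_add mult.commute)
    also have "\<dots> = \<alpha> ^ (fst w + b0 - (snd w + a0))" by (rule pdiv[OF c(1)])
    finally have 1: "\<kappa> * \<alpha> ^ fst w / \<alpha> ^ snd w = \<alpha> ^ (fst w + b0 - (snd w + a0))" .
    have 2: "\<alpha> ^ N / \<alpha> ^ snd w = \<alpha> ^ (N - snd w)" by (rule pdiv[OF c(2)])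
    show ?thesis using 1 2 by (simp add: T_def P_def g_def)
  qed
  have TiT: "Ti (T p) = p" if "snd p > 0" for p
    using that kp pow_pos[of N] a1 by (simp add: T_def Ti_def prod_eq_iff field_simps)
  have sndT: "snd (T p) > 0" if "snd p > 0" for p using that by (simp add: T_def pow_pos)
  have sndP: "snd (P w) > 0" for w by (simp add: P_def pow_pos)
  have injg: "inj_on g W"
  proof (rule inj_onI)
    fix u v assume uv: "u \<in> W" "v \<in> W" "g u = g v"
    have "P (g u) = P (g v)" using uv(3) by simp
    then have "T (P u) = T (P v)" using TP uv by simp
    then have "Ti (T (P u)) = Ti (T (P v))" by simp
    then show "u = v" using TiT sndP by simp
  qed
  have cardW': "card W' = card W" using injg by (simp add: W'_def card_image)
  have finW': "finite W'" using fin by (simp add: W'_def)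
  have PW: "P ` g ` S = T ` P ` S" if "S \<subseteq> W" for S
    using TP that by (auto simp: image_iff) (metis subsetD)+
  have TiTS: "Ti ` T ` P ` S = P ` S" for S
  proof -
    have "Ti ` T ` P ` S = (\<lambda>w. Ti (T (P w))) ` S" by (simp add: image_image)
    also have "\<dots> = P ` S" using TiT sndP by (simp cong: image_cong)
    finally show ?thesis .
  qed
  have hullTi: "Ti z \<in> convex hull (P ` S)" if SW: "S \<subseteq> W" and z: "z \<in> convex hull (T ` P ` S)" for S z
  proof -
    have finS: "finite (T ` P ` S)" using SW fin finite_subset by blast
    have "\<forall>p\<in>T ` P ` S. snd p > 0" using sndT sndP by auto
    from proj_hull[OF finS this z, of "\<alpha> ^ N / \<kappa>" "\<alpha> ^ N"]
    have "Ti z \<in> convex hull (Ti ` T ` P ` S)" by (simp add: Ti_def[abs_def])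
    then show ?thesis using TiTS by simp
  qed
  have cp': "cpos W'"
    unfolding cpos_def
  proof
    fix w' assume "w' \<in> W'"
    then obtain w where wW: "w \<in> W" and w': "w' = g w" by (auto simp: W'_def)
    show "P w' \<notin> convex hull (P ` (W' - {w'}))"
    proof
      assume h: "P w' \<in> convex hull (P ` (W' - {w'}))"
      have "W' - {w'} = g ` (W - {w})" using injg wW w' by (auto simp: W'_def inj_on_def)
      then have "P w' \<in> convex hull (T ` P ` (W - {w}))" using h PW[of "W - {w}"] by auto
      then have "Ti (P w') \<in> convex hull (P ` (W - {w}))" using hullTi[of "W - {w}"] by auto
      moreover have "Ti (P w') = P w" using TP[OF wW] TiT[OF sndP[of w]] w' by simp
      ultimately show False using cp wW by (auto simp: cpos_def)
    qed
  qed
  have em': "empt W'"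
    unfolding empt_def
  proof (intro allI impI)
    fix z assume h: "P z \<in> convex hull (P ` W')"
    obtain i j where z: "z = (i, j)" by (cases z)
    have "P z \<in> convex hull (T ` P ` W)" using h PW[of W] by (simp add: W'_def)
    then have tz: "Ti (P z) \<in> convex hull (P ` W)" using hullTi[of W] by auto
    then have ge: "1 \<le> fst (Ti (P z))" "1 \<le> snd (Ti (P z))" using hull_ge1 by auto
    have sTi: "snd (Ti (P z)) = \<alpha> ^ N / \<alpha> ^ j" by (simp add: Ti_def P_def z)
    have fTi: "fst (Ti (P z)) = \<alpha> ^ (N + a0 + i) / \<alpha> ^ (b0 + j)"
      using kp by (simp add: Ti_def P_def z \<kappa>_def power_add field_simps)
    have jN: "j \<le> N"
    proof (rule ccontr)
      assume "\<not> j \<le> N"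
      then have "\<alpha> ^ N < \<alpha> ^ j" by simp
      then have "\<alpha> ^ N / \<alpha> ^ j < 1" using pow_pos[of j] by simp
      then show False using ge(2) sTi by simp
    qed
    have ij: "b0 + j \<le> N + a0 + i"
    proof (rule ccontr)
      assume "\<not> ?thesis"
      then have "\<alpha> ^ (N + a0 + i) < \<alpha> ^ (b0 + j)" using pow_less_iff by (meson not_le)
      then have "\<alpha> ^ (N + a0 + i) / \<alpha> ^ (b0 + j) < 1" using pow_pos[of "b0 + j"] by simp
      then show False using ge(1) fTi by simp
    qed
    define m where "m = N + a0 + i - (b0 + j)"
    define n where "n = N - j"
    have "Ti (P z) = P (m, n)"
      using fTi sTi pdiv[OF ij] pdiv[OF jN] by (simp add: P_def m_def n_def prod_eq_iff)
    then have "(m, n) \<in> W" using tz em by (auto simp: empt_def)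
    moreover have "g (m, n) = z" using ij jN by (simp add: g_def m_def n_def z)
    ultimately show "z \<in> W'" by (auto simp: W'_def)
  qed
  have box': "\<forall>w\<in>W'. 0 \<le> fst w \<and> fst w \<le> M + b0 - (N + a0) \<and> 0 \<le> snd w \<and> snd w \<le> N - b0"
    using cl box by (auto simp: W'_def g_def)
  have A': "(0, N - b0) \<in> W'" using AW by (force simp: W'_def g_def)
  have B': "(M + b0 - (N + a0), 0) \<in> W'" using BW by (force simp: W'_def g_def)
  have "card W' \<le> 2 * k + 3" by (rule GNT[OF finW' cp' em' box' A' B' kk])
  then show ?thesis using cardW' by simp
qed

end

lemma linear_swap: "linear (prod.swap :: real \<times> real \<Rightarrow> real \<times> real)"
  by (rule linearI) (simp_all add: prod_eq_iff)

lemma scal_seg: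
  fixes p :: "real \<times> real"
  assumes "1 \<le> l" "l \<le> mu"
  shows "l *\<^sub>R p \<in> closed_segment p (mu *\<^sub>R p)"
proof (cases "mu = 1")
  case True
  then have "l = 1" using assms by simp
  then show ?thesis by simp
next
  case False
  then have d: "mu - 1 > 0" using assms by simp
  define u where "u = (l - 1) / (mu - 1)"
  have u: "0 \<le> u" "u \<le> 1" using assms d by (auto simp: u_def divide_simps)
  have e: "u * (mu - 1) = l - 1" using d by (simp add: u_def)
  have "(1 - u) *\<^sub>R p + u *\<^sub>R (mu *\<^sub>R p) = (1 + u * (mu - 1)) *\<^sub>R p"
    by (simp add: algebra_simps)
  also have "\<dots> = l *\<^sub>R p" using e by simp
  finally show ?thesis using u by (auto simp: in_segment)
qed

context explat begin

lemma P_swap: "P (prod.swap w) = prod.swap (P w)" by (simp add: P_def)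

lemma hull_swap: "convex hull (prod.swap ` S) = prod.swap ` (convex hull (S :: (real \<times> real) set))"
  by (rule convex_hull_linear_image[OF linear_swap, symmetric])

lemma swap_props:
  assumes "cpos W" "empt W"
  shows "cpos (prod.swap ` W)" "empt (prod.swap ` W)"
proof -
  have PS: "P ` prod.swap ` S = prod.swap ` P ` S" for S by (auto simp: image_image P_swap)
  show "cpos (prod.swap ` W)"
    unfolding cpos_def
  proof
    fix w' assume "w' \<in> prod.swap ` W"
    then obtain w where wW: "w \<in> W" and w': "w' = prod.swap w" by auto
    have injs: "inj prod.swap" by (rule injI) (metis swap_swap)
    have "prod.swap ` W - {w'} = prod.swap ` (W - {w})" using w' image_set_diff[OF injs, of W "{w}"] by simp
    then have "convex hull (P ` (prod.swap ` W - {w'})) = prod.swap ` (convex hull (P ` (W - {w})))"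
      by (simp add: PS hull_swap)
    moreover have nin: "P w \<notin> convex hull (P ` (W - {w}))" using assms(1) wW by (auto simp: cpos_def)
    ultimately show "P w' \<notin> convex hull (P ` (prod.swap ` W - {w'}))"
    proof -
      assume eq: "convex hull (P ` (prod.swap ` W - {w'})) = prod.swap ` (convex hull (P ` (W - {w})))"
      show ?thesis
      proof
        assume "P w' \<in> convex hull (P ` (prod.swap ` W - {w'}))"
        then have "prod.swap (P w) \<in> prod.swap ` (convex hull (P ` (W - {w})))"
          using eq w' P_swap by simp
        then have "P w \<in> convex hull (P ` (W - {w}))" using injs by (simp add: inj_image_mem_iff)
        then show False using nin by simp
      qed
    qed
  qed
  show "empt (prod.swap ` W)"
    unfolding empt_def
  proof (intro allI impI)
    fix z assume "P z \<in> convex hull (P ` prod.swap ` W)"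
    then have "prod.swap (P (prod.swap z)) \<in> prod.swap ` (convex hull (P ` W))"
      by (simp add: PS hull_swap P_swap)
    moreover have injs: "inj prod.swap" by (rule injI) (metis swap_swap)
    ultimately have "P (prod.swap z) \<in> convex hull (P ` W)" by (simp add: inj_image_mem_iff)
    then have "prod.swap z \<in> W" using assms(2) unfolding empt_def by blast
    then show "z \<in> prod.swap ` W" by (metis image_eqI swap_swap)
  qed
qed

lemma main_bound:
  assumes fin: "finite W" and ne: "W \<noteq> {}" and cp: "cpos W" and em: "empt W"
    and kk: "\<alpha> / (\<alpha> - 1) \<le> \<alpha> ^ k"
  shows "card W \<le> 2 * k + 3"
proof -
  define a0 where "a0 = Min (fst ` W)"
  define M where "M = Max (fst ` W)"
  define b0 where "b0 = Min (snd ` W)"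
  define N where "N = Max (snd ` W)"
  have box: "\<forall>w\<in>W. a0 \<le> fst w \<and> fst w \<le> M \<and> b0 \<le> snd w \<and> snd w \<le> N"
    using fin by (auto simp: a0_def M_def b0_def N_def)
  have "a0 \<in> fst ` W" unfolding a0_def using fin ne by (intro Min_in) auto
  then have ea0: "\<exists>w\<in>W. fst w = a0" by auto
  have "M \<in> fst ` W" unfolding M_def using fin ne by (intro Max_in) auto
  then have eM: "\<exists>w\<in>W. fst w = M" by auto
  have "b0 \<in> snd ` W" unfolding b0_def using fin ne by (intro Min_in) auto
  then have eb0: "\<exists>w\<in>W. snd w = b0" by auto
  have "N \<in> snd ` W" unfolding N_def using fin ne by (intro Max_in) auto
  then have eN: "\<exists>w\<in>W. snd w = N" by auto
  show ?thesis
  proof (cases "(a0, N) \<in> W \<and> (M, b0) \<in> W")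
    case True
    then show ?thesis using GNT[OF fin cp em box _ _ kk] by blast
  next
    case neg: False
    have c00: "(a0, b0) \<in> W" using claimS1[OF fin cp em box ea0 eM eb0 eN] neg by blast
    have c11: "(M, N) \<in> W" using claimS2[OF fin cp em box ea0 eM eb0 eN] neg by blast
    have aM: "a0 < M"
    proof (rule ccontr)
      assume "\<not> a0 < M"
      then have "a0 = M" using box c00 by fastforce
      then show False using neg c00 c11 by simp
    qed
    have bN: "b0 < N"
    proof (rule ccontr)
      assume "\<not> b0 < N"
      then have "b0 = N" using box c00 by fastforce
      then show False using neg c00 c11 by simp
    qed
    consider (lt) "N + a0 < M + b0" | (gt) "M + b0 < N + a0" | (eq) "N + a0 = M + b0" by linarith
    then show ?thesis
    proof cases
      case lt
      show ?thesis by (rule pos_shallow[OF fin cp em box c00 c11 lt bN kk])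
    next
      case gt
      define Ws where "Ws = prod.swap ` W"
      have fins: "finite Ws" using fin by (simp add: Ws_def)
      have cps: "cpos Ws" and ems: "empt Ws" using swap_props[OF cp em] by (auto simp: Ws_def)
      have boxs: "\<forall>w\<in>Ws. b0 \<le> fst w \<and> fst w \<le> N \<and> a0 \<le> snd w \<and> snd w \<le> M"
        using box by (auto simp: Ws_def)
      have c00s: "(b0, a0) \<in> Ws" using c00 by (force simp: Ws_def)
      have c11s: "(N, M) \<in> Ws" using c11 by (force simp: Ws_def)
      have shs: "M + b0 < N + a0" using gt by simp
      have "card Ws \<le> 2 * k + 3" by (rule pos_shallow[OF fins cps ems boxs c00s c11s _ aM kk]) (use gt in simp)
      moreover have "card Ws = card W" by (simp add: Ws_def card_image)
      ultimately show ?thesis by simp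
    next
      case eq
      define t where "t = M - a0"
      have Mt: "M = a0 + t" and Nt: "N = b0 + t" using eq aM by (auto simp: t_def)
      show ?thesis
      proof (cases "t = 1")
        case True
        have "W \<subseteq> {(a0, b0), (a0, b0 + 1), (a0 + 1, b0), (a0 + 1, b0 + 1)}"
        proof
          fix w assume wW: "w \<in> W"
          have "fst w = a0 \<or> fst w = a0 + 1" "snd w = b0 \<or> snd w = b0 + 1"
            using box wW True Mt Nt by force+
          then show "w \<in> {(a0, b0), (a0, b0 + 1), (a0 + 1, b0), (a0 + 1, b0 + 1)}"
            by (cases w) auto
        qed
        then have "card W \<le> card {(a0, b0), (a0, b0 + 1), (a0 + 1, b0), (a0 + 1, b0 + 1)}"
          by (intro card_mono) auto
        also have "\<dots> \<le> 4" by (rule card4)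
        finally show ?thesis using rowbound[of "{}" 1 1 k] kk by simp
      next
        case False
        then have t2: "2 \<le> t" using aM Mt by simp
        have "\<alpha> \<le> \<alpha> ^ t" using t2 a1 by (metis One_nat_def Suc_1 Suc_leD power_increasing_iff power_one_right less_imp_le) 
        then have "\<alpha> *\<^sub>R P (a0, b0) \<in> closed_segment (P (a0, b0)) ((\<alpha> ^ t) *\<^sub>R P (a0, b0))"
          using a1 by (intro scal_seg) auto
        moreover have "\<alpha> *\<^sub>R P (a0, b0) = P (a0 + 1, b0 + 1)" by (simp add: P_def)
        moreover have "(\<alpha> ^ t) *\<^sub>R P (a0, b0) = P (M, N)" by (simp add: P_def Mt Nt power_add)
        ultimately have sg: "P (a0 + 1, b0 + 1) \<in> closed_segment (P (a0, b0)) (P (M, N))" by simp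
        have ne1: "(a0 + 1, b0 + 1) \<noteq> (a0, b0)" and ne2: "(a0 + 1, b0 + 1) \<noteq> (M, N)" using t2 Mt by auto
        have False by (rule segnx[OF cp em c00 c11 ne1 ne2 sg])
        then show ?thesis ..
      qed
    qed
  qed
qed

end

theorem theorem1:
  fixes \<alpha> :: real
  assumes "\<alpha> > 1"
  shows "helly_number (L2 \<alpha>) \<le> enat (nat (2 * \<lceil>log \<alpha> (\<alpha> / (\<alpha> - 1))\<rceil> + 3))"
proof -
  interpret explat \<alpha> using assms by unfold_locales
  define c where "c = \<lceil>log \<alpha> (\<alpha> / (\<alpha> - 1))\<rceil>"
  have q1: "\<alpha> / (\<alpha> - 1) > 1" using assms by (simp add: field_simps)
  have lp: "log \<alpha> (\<alpha> / (\<alpha> - 1)) > 0" using assms q1 by simp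
  have lc: "log \<alpha> (\<alpha> / (\<alpha> - 1)) \<le> of_int c" unfolding c_def by (rule le_of_int_ceiling)
  have c0: "c \<ge> 0" using lp lc by linarith
  define k where "k = nat c"
  have rk: "real k = of_int c" using c0 by (simp add: k_def)
  have kk: "\<alpha> / (\<alpha> - 1) \<le> \<alpha> ^ k"
  proof -
    have "\<alpha> / (\<alpha> - 1) = \<alpha> powr (log \<alpha> (\<alpha> / (\<alpha> - 1)))" using assms q1 by simp
    also have "\<dots> \<le> \<alpha> powr (real k)" using lc rk assms by (intro powr_mono) auto
    also have "\<dots> = \<alpha> ^ k" using assms by (simp add: powr_realpow)
    finally show ?thesis .
  qed
  have hp: "helly_prop (L2 \<alpha>) (2 * k + 3)"
  proof (rule doignon)
    fix X :: "(real \<times> real) set" assume finX: "finite X"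
    have "bounded (convex hull X)"
      using finite_imp_compact_convex_hull[OF finX] by (rule compact_imp_bounded)
    then obtain R where R: "\<forall>x\<in>convex hull X. norm x \<le> R"
      unfolding Elementary_Metric_Spaces.bounded_iff by blast
    obtain B where B: "R < \<alpha> ^ B" using real_arch_pow[OF assms] by blast
    have "L2 \<alpha> \<inter> convex hull X \<subseteq> P ` ({..<B} \<times> {..<B})"
    proof
      fix p assume p: "p \<in> L2 \<alpha> \<inter> convex hull X"
      then obtain m n where pmn: "p = P (m, n)" using L2_eq by auto
      have np: "norm p \<le> R" using R p by auto
      have "\<alpha> ^ m \<le> norm p"
        using norm_fst_le[of "\<alpha> ^ m" "\<alpha> ^ n"] pmn pow_pos[of m] by (simp add: P_def)
      then have "\<alpha> ^ m < \<alpha> ^ B" using np B by linarith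
      then have m: "m < B" by simp
      have "\<alpha> ^ n \<le> norm p"
        using norm_snd_le[of "\<alpha> ^ n" "\<alpha> ^ m"] pmn pow_pos[of n] by (simp add: P_def)
      then have "\<alpha> ^ n < \<alpha> ^ B" using np B by linarith
      then have n: "n < B" by simp
      show "p \<in> P ` ({..<B} \<times> {..<B})" using pmn m n by auto
    qed
    then show "finite (L2 \<alpha> \<inter> convex hull X)" by (rule finite_subset) simp
  next
    fix Y :: "(real \<times> real) set"
    assume finY: "finite Y" and YL: "Y \<subseteq> L2 \<alpha>" and cpY: "\<forall>y\<in>Y. y \<notin> convex hull (Y - {y})"
      and emY: "convex hull Y \<inter> L2 \<alpha> \<subseteq> Y"
    define W where "W = P -` Y"
    have YW: "Y = P ` W" using YL L2_eq by (auto simp: W_def)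
    have finW: "finite W" unfolding W_def using finY inj_P by (intro finite_vimageI) auto
    have cardYW: "card Y = card W" using YW inj_P by (simp add: card_image inj_on_subset)
    have cpW: "cpos W"
      unfolding cpos_def
    proof
      fix w assume wW: "w \<in> W"
      have "P ` (W - {w}) = Y - {P w}" using YW inj_P by (auto simp: inj_eq)
      then show "P w \<notin> convex hull (P ` (W - {w}))" using cpY wW YW by auto
    qed
    have emW: "empt W"
      unfolding empt_def
    proof (intro allI impI)
      fix z assume "P z \<in> convex hull (P ` W)"
      moreover have "P z \<in> L2 \<alpha>" using L2_eq by auto
      ultimately have "P z \<in> Y" using emY YW by auto
      then show "z \<in> W" by (simp add: W_def)
    qed
    show "card Y \<le> 2 * k + 3"
    proof (cases "W = {}")
      case True
      then show ?thesis using cardYW by simp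
    next
      case False
      then show ?thesis using main_bound[OF finW False cpW emW kk] cardYW by simp
    qed
  qed
  have "helly_number (L2 \<alpha>) \<le> enat (2 * k + 3)"
  proof -
    have ex: "\<exists>h. helly_prop (L2 \<alpha>) h" using hp by blast
    have "(LEAST h. helly_prop (L2 \<alpha>) h) \<le> 2 * k + 3" using hp by (rule Least_le)
    then show ?thesis using ex by (simp add: helly_number_def)
  qed
  moreover have "nat (2 * c + 3) = 2 * k + 3" using c0 by (simp add: k_def nat_add_distrib nat_mult_distrib)
  ultimately show ?thesis by (simp add: c_def)
qed

end
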